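(* Let $p\ge 2$ and let $f\colon X\times Y\to\mathbb R$ be centered with $\|f\|D_p<\infty$. Then $$\sup_{L\subset\mathbb Z_+^2,\ 1\le|L|<\infty}|S_L[f]|_p\le K_R^2(p)\,\|f\|D_p .$$
   Context: Let $(X,\mathcal B,\mu)$, $(Y,\mathcal C,\nu)$ be probability spaces and $\xi(1),\xi(2),\dots,\eta(1),\eta(2),\dots$ mutually independent random variables, $\xi(i)$ with law $\mu$, $\eta(j)$ with law $\nu$; $\xi=\xi(1)$, $\eta=\eta(1)$; $|\zeta|_p=(\mathbf E|\zeta|^p)^{1/p}$, $|g|_p=|g(\xi)|_p$, $|h|_p=|h(\eta)|_p$. Centered means $\mathbf E f(\xi,\eta)=0$. For finite non-empty $L\subset\mathbb Z_+^2$ ($\mathbb Z_+=\{1,2,\dots\}$), $S_L[f]:=|L|^{-1/2}\sum_{(k_1,k_2)\in L}f(\xi(k_1),\eta(k_2))$. $K_R(p)$ is the smallest constant $K$ such that for all $n$, real $c_1,\dots,c_n$, and i.i.d. centered $\zeta_1,\dots,\zeta_n$ with finite $p$-th moment, $|\sum c_i\zeta_i|_p\le K(\sum c_i^2)^{1/2}|\zeta_1|_p$. $\|f\|D_p:=\inf\sum_{i,j}|\lambda_{i,j}||g_i|_p|h_j|_p$ over all representations $f(x,y)=\sum_{i,j=1}^M\lambda_{i,j}g_i(x)h_j(y)$, $M\le\infty$, with $\mathbf E g_i(\xi)=\mathbf E h_j(\eta)=0$, $g_i\in L_p(\mu)$, $h_j\in L_p(\nu)$, the series converging in $L_p(\mu\otimes\nu)$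 if $M=\infty$. *)

theory Defs
  imports "HOL-Probability.Probability"
begin

definition lpnorm :: "'a measure \<Rightarrow> real \<Rightarrow> ('a \<Rightarrow> real) \<Rightarrow> ereal" where
  "lpnorm M p g =
     (if integrable M (\<lambda>x. \<bar>g x\<bar> powr p)
      then ereal ((\<integral>x. \<bar>g x\<bar> powr p \<partial>M) powr (1 / p)) else \<infinity>)"

text \<open>Real-valued p-norm, used for functions already known to lie in L_p.\<close>
definition Lpn :: "'a measure \<Rightarrow> real \<Rightarrow> ('a \<Rightarrow> real) \<Rightarrow> real" where
  "Lpn M p g = (\<integral>x. \<bar>g x\<bar> powr p \<partial>M) powr (1 / p)"

text \<open>Since the inequality only
  depends on the common law, the underlying probability spaces are taken on the
  type nat => real (where every i.i.d. sequence can be realised).\<close>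
definition KR :: "real \<Rightarrow> ereal" where
  "KR p = Inf {ereal K | K. \<forall>(M :: (nat \<Rightarrow> real) measure) (n::nat) (c :: nat \<Rightarrow> real)
      (\<zeta> :: nat \<Rightarrow> (nat \<Rightarrow> real) \<Rightarrow> real).
      prob_space M \<and> 0 < n \<and>
      (\<forall>i<n. \<zeta> i \<in> borel_measurable M) \<and>
      prob_space.indep_vars M (\<lambda>_. borel) \<zeta> {..<n} \<and>
      (\<forall>i<n. distr M borel (\<zeta> i) = distr M borel (\<zeta> 0)) \<and>
      integrable M (\<lambda>\<omega>. \<bar>\<zeta> 0 \<omega>\<bar> powr p) \<and>
      integrable M (\<zeta> 0) \<and> (\<integral>\<omega>. \<zeta> 0 \<omega> \<partial>M) = 0
      \<longrightarrow> lpnorm M p (\<lambda>\<omega>. \<Sum>i<n. c i * \<zeta> i \<omega>)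
            \<le> ereal K * ereal (sqrt (\<Sum>i<n. (c i)\<^sup>2)) * lpnorm M p (\<zeta> 0)}"

text \<open>Finite representations (M < infinity) are the special case
  where lambda vanishes outside a finite square; the double series is required to
  converge to f in L_p(mu x nu) along square partial sums.\<close>
definition Dnorm :: "'x measure \<Rightarrow> 'y measure \<Rightarrow> real \<Rightarrow> ('x \<times> 'y \<Rightarrow> real) \<Rightarrow> ereal" where
  "Dnorm \<mu> \<nu> p f = Inf {c. \<exists>(lam :: nat \<Rightarrow> nat \<Rightarrow> real) (g :: nat \<Rightarrow> 'x \<Rightarrow> real) (h :: nat \<Rightarrow> 'y \<Rightarrow> real).
      (\<forall>i. g i \<in> borel_measurable \<mu> \<and> integrable \<mu> (\<lambda>x. \<bar>g i x\<bar> powr p) \<and>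
           integrable \<mu> (g i) \<and> (\<integral>x. g i x \<partial>\<mu>) = 0) \<and>
      (\<forall>j. h j \<in> borel_measurable \<nu> \<and> integrable \<nu> (\<lambda>y. \<bar>h j y\<bar> powr p) \<and>
           integrable \<nu> (h j) \<and> (\<integral>y. h j y \<partial>\<nu>) = 0) \<and>
      ((\<lambda>N. \<integral>\<^sup>+ z. ennreal (\<bar>(\<Sum>i<N. \<Sum>j<N. lam i j * g i (fst z) * h j (snd z)) - f z\<bar> powr p)
              \<partial>(\<mu> \<Otimes>\<^sub>M \<nu>)) \<longlonglongrightarrow> 0) \<and>
      c = (\<Sum>i. \<Sum>j. ereal (\<bar>lam i j\<bar> * Lpn \<mu> p (g i) * Lpn \<nu> p (h j)))}"

text \<open>xi(1), xi(2), ..., eta(1), eta(2), ... are mutually independent, xi(i) has law mu,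
  eta(j) has law nu (indices start at 1; index 0 is irrelevant).\<close>
definition indep_laws :: "'m measure \<Rightarrow> 'x measure \<Rightarrow> 'y measure \<Rightarrow>
    (nat \<Rightarrow> 'm \<Rightarrow> 'x) \<Rightarrow> (nat \<Rightarrow> 'm \<Rightarrow> 'y) \<Rightarrow> bool" where
  "indep_laws M \<mu> \<nu> \<xi> \<eta> \<longleftrightarrow>
     (\<forall>i\<ge>1. \<xi> i \<in> M \<rightarrow>\<^sub>M \<mu>) \<and> (\<forall>j\<ge>1. \<eta> j \<in> M \<rightarrow>\<^sub>M \<nu>) \<and>
     (\<forall>I J A B. finite I \<and> finite J \<and> I \<subseteq> {1..} \<and> J \<subseteq> {1..} \<and>
        (\<forall>i\<in>I. A i \<in> sets \<mu>) \<and> (\<forall>j\<in>J. B j \<in> sets \<nu>) \<longrightarrow>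
        measure M ((\<Inter>i\<in>I. \<xi> i -` A i) \<inter> (\<Inter>j\<in>J. \<eta> j -` B j) \<inter> space M)
          = (\<Prod>i\<in>I. measure \<mu> (A i)) * (\<Prod>j\<in>J. measure \<nu> (B j)))"

definition SL :: "(nat \<times> nat) set \<Rightarrow> ('x \<times> 'y \<Rightarrow> real) \<Rightarrow> (nat \<Rightarrow> 'm \<Rightarrow> 'x) \<Rightarrow>
    (nat \<Rightarrow> 'm \<Rightarrow> 'y) \<Rightarrow> 'm \<Rightarrow> real" where
  "SL L f \<xi> \<eta> \<omega> = (1 / sqrt (real (card L))) * (\<Sum>(k1, k2)\<in>L. f (\<xi> k1 \<omega>, \<eta> k2 \<omega>))"

end

theory Submission
  imports Defs
begin

lemma powr_conv_nonneg:
  fixes x y t p :: real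
  assumes p: "p \<ge> 1" and t: "0 \<le> t" "t \<le> 1" and xy: "0 \<le> x" "0 \<le> y"
  shows "((1 - t) * x + t * y) powr p \<le> (1 - t) * x powr p + t * y powr p"
proof (cases "x = 0 \<or> y = 0")
  case True
  have tp: "s powr p \<le> s" if "0 \<le> s" "s \<le> 1" for s :: real
    using that p powr_le_one_le[of s p] by (cases "s = 0") auto
  show ?thesis
  proof (cases "x = 0")
    case True
    have "(t * y) powr p = t powr p * y powr p" using t xy by (simp add: powr_mult)
    also have "\<dots> \<le> t * y powr p" using tp[of t] t by (intro mult_right_mono) auto
    finally show ?thesis using True by simp
  next
    case False
    with True have y0: "y = 0" by auto
    have "((1 - t) * x) powr p = (1 - t) powr p * x powr p" using t xy by (simp add: powr_mult)
    also have "\<dots> \<le> (1 - t) * x powr p" using tp[of "1 - t"] t by (intro mult_right_mono) auto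
    finally show ?thesis using y0 by simp
  qed
next
  case False
  then have "x > 0" "y > 0" using xy by auto
  then show ?thesis
    using convex_onD[OF powr_convex[OF p], of t x y] t by simp
qed

lemma powr_conv_pt:
  fixes u v t p :: real
  assumes p: "p \<ge> 1" and t: "0 \<le> t" "t \<le> 1"
  shows "\<bar>t * u + (1 - t) * v\<bar> powr p \<le> t * \<bar>u\<bar> powr p + (1 - t) * \<bar>v\<bar> powr p"
proof -
  have "\<bar>t * u + (1 - t) * v\<bar> \<le> t * \<bar>u\<bar> + (1 - t) * \<bar>v\<bar>"
    using t by (metis abs_mult abs_of_nonneg abs_triangle_ineq diff_ge_0_iff_ge)
  then have "\<bar>t * u + (1 - t) * v\<bar> powr p \<le> (t * \<bar>u\<bar> + (1 - t) * \<bar>v\<bar>) powr p"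
    using p by (intro powr_mono2) auto
  also have "\<dots> \<le> t * \<bar>u\<bar> powr p + (1 - t) * \<bar>v\<bar> powr p"
    using powr_conv_nonneg[OF p, of "1 - t" "\<bar>u\<bar>" "\<bar>v\<bar>"] t by (simp add: algebra_simps)
  finally show ?thesis .
qed


lemma Lpn_nonneg: "Lpn N p f \<ge> 0"
  by (simp add: Lpn_def)

lemma Lpn_pow:
  assumes "p > 0"
  shows "Lpn N p f powr p = (\<integral>x. \<bar>f x\<bar> powr p \<partial>N)"
proof -
  have "(\<integral>x. \<bar>f x\<bar> powr p \<partial>N) \<ge> 0" by (intro integral_nonneg_AE) auto
  then show ?thesis using assms by (simp add: Lpn_def powr_powr)
qed

lemma Lpn_le_iff:
  assumes "p > 0" "c \<ge> 0" "(\<integral>x. \<bar>f x\<bar> powr p \<partial>N) \<le> c powr p"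
  shows "Lpn N p f \<le> c"
proof -
  have "(\<integral>x. \<bar>f x\<bar> powr p \<partial>N) \<ge> 0" by (intro integral_nonneg_AE) auto
  then have "Lpn N p f \<le> (c powr p) powr (1/p)"
    unfolding Lpn_def using assms by (intro powr_mono2) auto
  also have "\<dots> = c" using assms by (simp add: powr_powr)
  finally show ?thesis .
qed

lemma minkowski_integrable:
  fixes f g :: "'a \<Rightarrow> real"
  assumes p: "p \<ge> 1" and [measurable]: "f \<in> borel_measurable N" "g \<in> borel_measurable N"
    and fi: "integrable N (\<lambda>x. \<bar>f x\<bar> powr p)" and gi: "integrable N (\<lambda>x. \<bar>g x\<bar> powr p)"
  shows "integrable N (\<lambda>x. \<bar>f x + g x\<bar> powr p)"
proof (rule Bochner_Integration.integrable_bound)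
  show "integrable N (\<lambda>x. (2 powr p / 2) * (\<bar>f x\<bar> powr p + \<bar>g x\<bar> powr p))"
    using fi gi by auto
  show "(\<lambda>x. \<bar>f x + g x\<bar> powr p) \<in> borel_measurable N" by measurable
  show "AE x in N. norm (\<bar>f x + g x\<bar> powr p) \<le> norm ((2 powr p / 2) * (\<bar>f x\<bar> powr p + \<bar>g x\<bar> powr p))"
  proof (intro AE_I2)
    fix x
    have "\<bar>(1/2) * (2 * f x) + (1 - 1/2) * (2 * g x)\<bar> powr p
        \<le> (1/2) * \<bar>2 * f x\<bar> powr p + (1 - 1/2) * \<bar>2 * g x\<bar> powr p"
      by (rule powr_conv_pt[OF p]) auto
    also have "\<dots> = (2 powr p / 2) * (\<bar>f x\<bar> powr p + \<bar>g x\<bar> powr p)"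
      by (simp add: abs_mult powr_mult algebra_simps)
    finally show "norm (\<bar>f x + g x\<bar> powr p) \<le> norm ((2 powr p / 2) * (\<bar>f x\<bar> powr p + \<bar>g x\<bar> powr p))"
      by simp
  qed
qed

lemma minkowski:
  fixes f g :: "'a \<Rightarrow> real"
  assumes p: "p \<ge> 1" and [measurable]: "f \<in> borel_measurable N" "g \<in> borel_measurable N"
    and fi: "integrable N (\<lambda>x. \<bar>f x\<bar> powr p)" and gi: "integrable N (\<lambda>x. \<bar>g x\<bar> powr p)"
  shows "Lpn N p (\<lambda>x. f x + g x) \<le> Lpn N p f + Lpn N p g"
proof (rule field_le_epsilon)
  fix e :: real assume e: "e > 0"
  define a where "a = Lpn N p f"
  define b where "b = Lpn N p g"
  define A where "A = a + e/2"
  define B where "B = b + e/2"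
  have a0: "a \<ge> 0" "b \<ge> 0" by (auto simp: a_def b_def Lpn_nonneg)
  then have AB: "A > 0" "B > 0" using e by (auto simp: A_def B_def)
  define t where "t = A / (A + B)"
  have t: "0 \<le> t" "t \<le> 1" "1 - t = B / (A + B)" using AB by (auto simp: t_def field_simps)
  have pt: "\<bar>f x + g x\<bar> powr p \<le> (A + B) powr p * (t / A powr p * \<bar>f x\<bar> powr p + (1 - t) / B powr p * \<bar>g x\<bar> powr p)"
    for x
  proof -
    have e1: "t * (f x / A) = f x / (A + B)" using AB by (simp add: t_def)
    have e2: "(1 - t) * (g x / B) = g x / (A + B)" using AB by (simp add: t(3))
    have "f x + g x = (A + B) * (t * (f x / A) + (1 - t) * (g x / B))"
      unfolding e1 e2 using AB by (simp add: add_divide_distrib[symmetric])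
    then have "\<bar>f x + g x\<bar> powr p = (A + B) powr p * \<bar>t * (f x / A) + (1 - t) * (g x / B)\<bar> powr p"
      using AB by (simp add: abs_mult powr_mult)
    also have "\<dots> \<le> (A + B) powr p * (t * \<bar>f x / A\<bar> powr p + (1 - t) * \<bar>g x / B\<bar> powr p)"
      by (intro mult_left_mono powr_conv_pt[OF p t(1,2)]) auto
    also have "\<dots> = (A + B) powr p * (t / A powr p * \<bar>f x\<bar> powr p + (1 - t) / B powr p * \<bar>g x\<bar> powr p)"
      using AB by (simp add: abs_divide powr_divide)
    finally show ?thesis .
  qed
  have "(\<integral>x. \<bar>f x + g x\<bar> powr p \<partial>N) \<le>
      (\<integral>x. (A + B) powr p * (t / A powr p * \<bar>f x\<bar> powr p + (1 - t) / B powr p * \<bar>g x\<bar> powr p) \<partial>N)"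
    using fi gi minkowski_integrable[OF assms] pt by (intro integral_mono) auto
  also have "\<dots> = (A + B) powr p * (t / A powr p * a powr p + (1 - t) / B powr p * b powr p)"
    using fi gi p by (simp add: a_def b_def Lpn_pow)
  also have "\<dots> \<le> (A + B) powr p * (t * 1 + (1 - t) * 1)"
  proof -
    have "a powr p \<le> A powr p" "b powr p \<le> B powr p"
      using a0 e p by (auto simp: A_def B_def intro!: powr_mono2)
    then have r: "a powr p / A powr p \<le> 1" "b powr p / B powr p \<le> 1"
      using AB by auto
    then have "t / A powr p * a powr p \<le> t * 1" "(1 - t) / B powr p * b powr p \<le> (1 - t) * 1"
    proof -
      have "t / A powr p * a powr p = t * (a powr p / A powr p)" by simp
      also have "\<dots> \<le> t * 1" using t r by (intro mult_left_mono) auto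
      finally show "t / A powr p * a powr p \<le> t * 1" .
      have "(1 - t) / B powr p * b powr p = (1 - t) * (b powr p / B powr p)" by simp
      also have "\<dots> \<le> (1 - t) * 1" using t r by (intro mult_left_mono) auto
      finally show "(1 - t) / B powr p * b powr p \<le> (1 - t) * 1" .
    qed
    then show ?thesis by (intro mult_left_mono) auto
  qed
  also have "\<dots> = (A + B) powr p" by simp
  finally have "Lpn N p (\<lambda>x. f x + g x) \<le> A + B"
    using AB p by (intro Lpn_le_iff) auto
  then show "Lpn N p (\<lambda>x. f x + g x) \<le> Lpn N p f + Lpn N p g + e"
    by (simp add: A_def B_def a_def b_def)
qed


lemma pps_const: "prob_space \<mu> \<Longrightarrow> product_prob_space (\<lambda>_. \<mu>)"
  by (simp add: product_prob_space_def product_prob_space_axioms_def product_sigma_finite_def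
        prob_space_imp_sigma_finite)

lemma indep_laws_meas:
  assumes "indep_laws M \<mu> \<nu> \<xi> \<eta>"
  shows "\<And>i. i \<ge> 1 \<Longrightarrow> \<xi> i \<in> M \<rightarrow>\<^sub>M \<mu>" "\<And>j. j \<ge> 1 \<Longrightarrow> \<eta> j \<in> M \<rightarrow>\<^sub>M \<nu>"
  using assms by (auto simp: indep_laws_def)

lemma indep_transfer:
  assumes M: "prob_space M" and mu: "prob_space \<mu>" and nu: "prob_space \<nu>"
    and ind: "indep_laws M \<mu> \<nu> \<xi> \<eta>"
    and A: "finite A" "A \<subseteq> {1..}" and B: "finite B" "B \<subseteq> {1..}"
  shows "distr M (PiM A (\<lambda>_. \<mu>) \<Otimes>\<^sub>M PiM B (\<lambda>_. \<nu>)) (\<lambda>\<omega>. (\<lambda>i\<in>A. \<xi> i \<omega>, \<lambda>j\<in>B. \<eta> j \<omega>))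
       = PiM A (\<lambda>_. \<mu>) \<Otimes>\<^sub>M PiM B (\<lambda>_. \<nu>)"
    (is "distr M (?P1 \<Otimes>\<^sub>M ?P2) ?F = _")
proof -
  interpret M: prob_space M by fact
  interpret m: product_prob_space "\<lambda>_. \<mu>" using mu by (rule pps_const)
  interpret n: product_prob_space "\<lambda>_. \<nu>" using nu by (rule pps_const)
  interpret P1: prob_space ?P1 using mu by (intro prob_space_PiM) auto
  interpret P2: prob_space ?P2 using nu by (intro prob_space_PiM) auto
  interpret P: pair_prob_space ?P1 ?P2 ..
  have mx: "\<xi> i \<in> M \<rightarrow>\<^sub>M \<mu>" if "i \<in> A" for i using indep_laws_meas(1)[OF ind] A that by auto
  have my: "\<eta> j \<in> M \<rightarrow>\<^sub>M \<nu>" if "j \<in> B" for j using indep_laws_meas(2)[OF ind] B that by auto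
  have Fm: "?F \<in> M \<rightarrow>\<^sub>M ?P1 \<Otimes>\<^sub>M ?P2"
    using mx my by (intro measurable_Pair measurable_restrict) auto
  let ?E = "{a \<times> b | a b. a \<in> prod_algebra A (\<lambda>_. \<mu>) \<and> b \<in> prod_algebra B (\<lambda>_. \<nu>)}"
  let ?\<Omega> = "space ?P1 \<times> space ?P2"
  have s1: "a \<subseteq> space ?P1" if "a \<in> prod_algebra A (\<lambda>_. \<mu>)" for a
    unfolding space_PiM using prod_algebra_sets_into_space[of A "\<lambda>_. \<mu>"] that by blast
  have s2: "a \<subseteq> space ?P2" if "a \<in> prod_algebra B (\<lambda>_. \<nu>)" for a
    unfolding space_PiM using prod_algebra_sets_into_space[of B "\<lambda>_. \<nu>"] that by blast
  have Esub: "?E \<subseteq> Pow ?\<Omega>"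
    using s1 s2 by blast
  have sets_eq: "sets (?P1 \<Otimes>\<^sub>M ?P2) = sigma_sets ?\<Omega> ?E"
  proof -
    have "sets (?P1 \<Otimes>\<^sub>M ?P2) = sets (sigma ?\<Omega> ?E)"
    proof (rule sets_pair_eq[where Ca="{space ?P1}" and Cb="{space ?P2}"])
      show "sets ?P1 = sigma_sets (space ?P1) (prod_algebra A (\<lambda>_. \<mu>))"
        by (simp add: sets_PiM space_PiM)
      show "sets ?P2 = sigma_sets (space ?P2) (prod_algebra B (\<lambda>_. \<nu>))"
        by (simp add: sets_PiM space_PiM)
      show "{space ?P1} \<subseteq> prod_algebra A (\<lambda>_. \<mu>)"
        using space_in_prod_algebra[of A "\<lambda>_. \<mu>"] by (simp add: space_PiM)
      show "{space ?P2} \<subseteq> prod_algebra B (\<lambda>_. \<nu>)"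
        using space_in_prod_algebra[of B "\<lambda>_. \<nu>"] by (simp add: space_PiM)
    qed (use s1 s2 in auto)
    then show ?thesis using Esub by simp
  qed
  have OmE: "?\<Omega> \<in> ?E"
    by (auto simp: space_PiM intro!: space_in_prod_algebra)
  show ?thesis
  proof (rule measure_eqI_generator_eq[where E="?E" and \<Omega>="?\<Omega>" and A="\<lambda>_. ?\<Omega>"])
    show "Int_stable ?E"
    proof (rule Int_stableI)
      fix a b assume "a \<in> ?E" "b \<in> ?E"
      then obtain a1 a2 b1 b2 where ab: "a = a1 \<times> a2" "b = b1 \<times> b2"
        and h: "a1 \<in> prod_algebra A (\<lambda>_. \<mu>)" "b1 \<in> prod_algebra A (\<lambda>_. \<mu>)"
        "a2 \<in> prod_algebra B (\<lambda>_. \<nu>)" "b2 \<in> prod_algebra B (\<lambda>_. \<nu>)" by auto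
      have "a \<inter> b = (a1 \<inter> b1) \<times> (a2 \<inter> b2)" using ab by auto
      moreover have "a1 \<inter> b1 \<in> prod_algebra A (\<lambda>_. \<mu>)" "a2 \<inter> b2 \<in> prod_algebra B (\<lambda>_. \<nu>)"
        using Int_stable_prod_algebra[of A "\<lambda>_. \<mu>"] Int_stable_prod_algebra[of B "\<lambda>_. \<nu>"] h
        unfolding Int_stable_def by blast+
      ultimately show "a \<inter> b \<in> ?E" by blast
    qed
    show "?E \<subseteq> Pow ?\<Omega>" by (rule Esub)
    show "sets (distr M (?P1 \<Otimes>\<^sub>M ?P2) ?F) = sigma_sets ?\<Omega> ?E" using sets_eq by simp
    show "sets (?P1 \<Otimes>\<^sub>M ?P2) = sigma_sets ?\<Omega> ?E" by (rule sets_eq)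
    show "range (\<lambda>_. ?\<Omega>) \<subseteq> ?E" using OmE by auto
    show "(\<Union>i::nat. ?\<Omega>) = ?\<Omega>" by simp
    show "emeasure (distr M (?P1 \<Otimes>\<^sub>M ?P2) ?F) ?\<Omega> \<noteq> \<infinity>"
      by (simp add: emeasure_distr[OF Fm] space_pair_measure[symmetric])
  next
    fix X assume "X \<in> ?E"
    then obtain a b where X: "X = a \<times> b" "a \<in> prod_algebra A (\<lambda>_. \<mu>)" "b \<in> prod_algebra B (\<lambda>_. \<nu>)"
      by auto
    obtain Xa where Xa: "a = Pi\<^sub>E A Xa" "Xa \<in> (\<Pi> i\<in>A. sets \<mu>)" using prod_algebraE_all[OF X(2)] by blast
    obtain Xb where Xb: "b = Pi\<^sub>E B Xb" "Xb \<in> (\<Pi> i\<in>B. sets \<nu>)" using prod_algebraE_all[OF X(3)] by blast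
    have pre: "?F -` X \<inter> space M = (\<Inter>i\<in>A. \<xi> i -` Xa i) \<inter> (\<Inter>j\<in>B. \<eta> j -` Xb j) \<inter> space M"
      by (auto simp: X Xa Xb PiE_iff)
    have "emeasure (distr M (?P1 \<Otimes>\<^sub>M ?P2) ?F) X = emeasure M (?F -` X \<inter> space M)"
    proof (rule emeasure_distr[OF Fm])
      show "X \<in> sets (?P1 \<Otimes>\<^sub>M ?P2)" unfolding sets_eq using \<open>X \<in> ?E\<close> by (rule sigma_sets.Basic)
    qed
    also have "\<dots> = ennreal (measure M (?F -` X \<inter> space M))"
      by (simp add: M.emeasure_eq_measure)
    also have "measure M (?F -` X \<inter> space M) = (\<Prod>i\<in>A. measure \<mu> (Xa i)) * (\<Prod>j\<in>B. measure \<nu> (Xb j))"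
    proof -
      have "\<forall>I J A B. finite I \<and> finite J \<and> I \<subseteq> {1..} \<and> J \<subseteq> {1..} \<and>
        (\<forall>i\<in>I. A i \<in> sets \<mu>) \<and> (\<forall>j\<in>J. B j \<in> sets \<nu>) \<longrightarrow>
        measure M ((\<Inter>i\<in>I. \<xi> i -` A i) \<inter> (\<Inter>j\<in>J. \<eta> j -` B j) \<inter> space M)
          = (\<Prod>i\<in>I. measure \<mu> (A i)) * (\<Prod>j\<in>J. measure \<nu> (B j))"
        using ind unfolding indep_laws_def by (elim conjE)
      from this[rule_format, of A B Xa Xb] show ?thesis unfolding pre using A B Xa Xb by auto
    qed
    also have "ennreal \<dots> = emeasure ?P1 a * emeasure ?P2 b"
    proof -
      have e1: "emeasure ?P1 (Pi\<^sub>E A Xa) = (\<Prod>i\<in>A. emeasure \<mu> (Xa i))"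
        by (rule m.emeasure_PiM) (use A Xa in auto)
      have e2: "emeasure ?P2 (Pi\<^sub>E B Xb) = (\<Prod>i\<in>B. emeasure \<nu> (Xb i))"
        by (rule product_sigma_finite.emeasure_PiM[OF product_prob_space.axioms(1)[OF pps_const[OF nu]]]) (use B Xb in auto)
      have mm: "emeasure \<mu> S = ennreal (measure \<mu> S)" for S
        using mu by (simp add: finite_measure.emeasure_eq_measure prob_space.finite_measure)
      have nn: "emeasure \<nu> S = ennreal (measure \<nu> S)" for S
        using nu by (simp add: finite_measure.emeasure_eq_measure prob_space.finite_measure)
      show ?thesis unfolding Xa(1) Xb(1) e1 e2 mm nn
        by (simp add: prod_ennreal ennreal_mult prod_nonneg)
    qed
    also have "\<dots> = emeasure (?P1 \<Otimes>\<^sub>M ?P2) X"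
      unfolding X(1)
      by (rule P2.emeasure_pair_measure_Times[symmetric])
        (simp_all add: sets_PiM sigma_sets.Basic[OF X(2)] sigma_sets.Basic[OF X(3)])
    finally show "emeasure (distr M (?P1 \<Otimes>\<^sub>M ?P2) ?F) X = emeasure (?P1 \<Otimes>\<^sub>M ?P2) X" .
  qed
qed


lemma indep_vars_distr:
  assumes P: "prob_space P" and T: "T \<in> P \<rightarrow>\<^sub>M S" and I: "I \<noteq> {}"
    and X: "\<And>i. i \<in> I \<Longrightarrow> X i \<in> S \<rightarrow>\<^sub>M M' i"
    and ind: "prob_space.indep_vars P M' (\<lambda>i x. X i (T x)) I"
  shows "prob_space.indep_vars (distr P S T) M' X I"
proof -
  interpret P: prob_space P by fact
  interpret N: prob_space "distr P S T" using T by (rule P.prob_space_distr)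
  have rvN: "X i \<in> distr P S T \<rightarrow>\<^sub>M M' i" if "i \<in> I" for i using X[OF that] by simp
  have rvP: "(\<lambda>x. X i (T x)) \<in> P \<rightarrow>\<^sub>M M' i" if "i \<in> I" for i
    using X[OF that] T by (rule measurable_compose[rotated])
  have m1: "(\<lambda>x. \<lambda>i\<in>I. X i x) \<in> S \<rightarrow>\<^sub>M PiM I M'"
    using X by (intro measurable_restrict) auto
  have "distr (distr P S T) (PiM I M') (\<lambda>x. \<lambda>i\<in>I. X i x) = distr P (PiM I M') (\<lambda>x. \<lambda>i\<in>I. X i (T x))"
    using m1 T by (simp add: distr_distr comp_def)
  also have "\<dots> = (\<Pi>\<^sub>M i\<in>I. distr P (M' i) (\<lambda>x. X i (T x)))"
    using P.indep_vars_iff_distr_eq_PiM'[OF I rvP] ind by simp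
  also have "\<dots> = (\<Pi>\<^sub>M i\<in>I. distr (distr P S T) (M' i) (X i))"
    using X T by (intro PiM_cong refl) (simp add: distr_distr comp_def)
  finally show ?thesis
    using N.indep_vars_iff_distr_eq_PiM'[OF I rvN] by simp
qed


definition KRP :: "real \<Rightarrow> real \<Rightarrow> bool" where
  "KRP K p \<longleftrightarrow> (\<forall>(M :: (nat \<Rightarrow> real) measure) (n::nat) (c :: nat \<Rightarrow> real)
      (\<zeta> :: nat \<Rightarrow> (nat \<Rightarrow> real) \<Rightarrow> real).
      prob_space M \<and> 0 < n \<and>
      (\<forall>i<n. \<zeta> i \<in> borel_measurable M) \<and>
      prob_space.indep_vars M (\<lambda>_. borel) \<zeta> {..<n} \<and>
      (\<forall>i<n. distr M borel (\<zeta> i) = distr M borel (\<zeta> 0)) \<and>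
      integrable M (\<lambda>\<omega>. \<bar>\<zeta> 0 \<omega>\<bar> powr p) \<and>
      integrable M (\<zeta> 0) \<and> (\<integral>\<omega>. \<zeta> 0 \<omega> \<partial>M) = 0
      \<longrightarrow> lpnorm M p (\<lambda>\<omega>. \<Sum>i<n. c i * \<zeta> i \<omega>)
            \<le> ereal K * ereal (sqrt (\<Sum>i<n. (c i)\<^sup>2)) * lpnorm M p (\<zeta> 0))"

lemma KR_eq: "KR p = Inf {ereal K | K. KRP K p}"
  unfolding KR_def KRP_def ..

lemma PiM_coords_indep:
  assumes mu: "prob_space \<mu>" and e: "bij_betw e {..<n} A" and n: "0 < n"
  shows "prob_space.indep_vars (PiM A (\<lambda>_. \<mu>)) (\<lambda>_. \<mu>) (\<lambda>i x. x (e i)) {..<n}"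
proof -
  interpret P: prob_space "PiM A (\<lambda>_. \<mu>)" using mu by (intro prob_space_PiM) auto
  have eA: "e i \<in> A" if "i < n" for i using e that by (auto simp: bij_betw_def)
  have rv: "(\<lambda>x. x (e i)) \<in> PiM A (\<lambda>_. \<mu>) \<rightarrow>\<^sub>M \<mu>" if "i \<in> {..<n}" for i
    using eA that by (intro measurable_component_singleton) auto
  have "distr (PiM A (\<lambda>_. \<mu>)) (PiM {..<n} (\<lambda>_. \<mu>)) (\<lambda>x. \<lambda>i\<in>{..<n}. x (e i))
      = PiM {..<n} (\<lambda>_. \<mu>)"
    using distr_PiM_reindex[of A "\<lambda>_. \<mu>" e "{..<n}"] mu e eA
    by (auto simp: bij_betw_def)
  also have "\<dots> = PiM {..<n} (\<lambda>i. distr (PiM A (\<lambda>_. \<mu>)) \<mu> (\<lambda>x. x (e i)))"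
    using mu eA by (intro PiM_cong refl) (subst distr_PiM_component[where M="\<lambda>_. \<mu>" and I=A], auto)
  moreover have ne: "{..<n} \<noteq> {}" using n by auto
  ultimately show ?thesis
    using P.indep_vars_iff_distr_eq_PiM'[where I="{..<n}" and M'="\<lambda>_. \<mu>" and X="\<lambda>i x. x (e i)", OF ne rv] by simp
qed

lemma KR_apply:
  fixes g :: "'x \<Rightarrow> real" and c :: "nat \<Rightarrow> real"
  assumes K: "KRP K p" and p: "p \<ge> 1" and mu: "prob_space \<mu>"
    and g: "g \<in> borel_measurable \<mu>" "integrable \<mu> (\<lambda>x. \<bar>g x\<bar> powr p)" "integrable \<mu> g"
      "(\<integral>x. g x \<partial>\<mu>) = 0"
    and A: "finite A" "A \<noteq> {}"
  shows "integrable (PiM A (\<lambda>_. \<mu>)) (\<lambda>x. \<bar>\<Sum>a\<in>A. c a * g (x a)\<bar> powr p)"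
    "(\<integral>x. \<bar>\<Sum>a\<in>A. c a * g (x a)\<bar> powr p \<partial>PiM A (\<lambda>_. \<mu>))
      \<le> (\<bar>K\<bar> * sqrt (\<Sum>a\<in>A. (c a)\<^sup>2)) powr p * (\<integral>x. \<bar>g x\<bar> powr p \<partial>\<mu>)"
proof -
  define n where "n = card A"
  have n: "0 < n" using A by (simp add: n_def card_gt_0_iff)
  obtain e where e0: "bij_betw e {0..<n} A" using ex_bij_betw_nat_finite[OF A(1)] n_def by blast
  have e: "bij_betw e {..<n} A" using e0 by (simp add: atLeast0LessThan)
  have eA: "e i \<in> A" if "i < n" for i using e that by (auto simp: bij_betw_def)
  define P where "P = PiM A (\<lambda>_. \<mu>)"
  interpret P: prob_space P unfolding P_def using mu by (intro prob_space_PiM) auto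
  define S where "S = (PiM UNIV (\<lambda>_. borel) :: (nat \<Rightarrow> real) measure)"
  define T where "T = (\<lambda>x. \<lambda>i. if i < n then g (x (e i)) else 0)"
  have comp: "(\<lambda>x. x a) \<in> P \<rightarrow>\<^sub>M \<mu>" if "a \<in> A" for a
    unfolding P_def using that by (intro measurable_component_singleton)
  have gc: "(\<lambda>x. g (x a)) \<in> borel_measurable P" if "a \<in> A" for a
    using measurable_compose[OF comp[OF that] g(1)] .
  have Tm: "T \<in> P \<rightarrow>\<^sub>M S"
    unfolding T_def S_def
  proof (rule measurable_PiM_single')
    fix i :: nat
    show "(\<lambda>x. if i < n then g (x (e i)) else 0) \<in> borel_measurable P"
      using gc[OF eA[of i]] by (cases "i < n") auto
  qed auto
  define N where "N = distr P S T"
  interpret N: prob_space N unfolding N_def using Tm by (rule P.prob_space_distr)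
  have compd: "distr P \<mu> (\<lambda>x. x a) = \<mu>" if "a \<in> A" for a
    unfolding P_def using mu that by (intro distr_PiM_component) auto
  have int_comp: "integrable P (\<lambda>x. F (g (x a))) \<longleftrightarrow> integrable \<mu> (\<lambda>x. F (g x))"
    "(\<integral>x. F (g (x a)) \<partial>P) = (\<integral>x. F (g x) \<partial>\<mu>)"
    if "a \<in> A" "F \<in> borel_measurable borel" for a and F :: "real \<Rightarrow> real"
  proof -
    have Fg: "(\<lambda>x. F (g x)) \<in> borel_measurable \<mu>" using that g(1) by measurable
    show "integrable P (\<lambda>x. F (g (x a))) \<longleftrightarrow> integrable \<mu> (\<lambda>x. F (g x))"
      using integrable_distr_eq[OF comp[OF that(1)] Fg] compd[OF that(1)] by simp
    show "(\<integral>x. F (g (x a)) \<partial>P) = (\<integral>x. F (g x) \<partial>\<mu>)"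
      using integral_distr[OF comp[OF that(1)] Fg] compd[OF that(1)] by simp
  qed
  define \<zeta> where "\<zeta> = (\<lambda>(i::nat) (\<omega>::nat \<Rightarrow> real). \<omega> i)"
  have \<zeta>m: "\<zeta> i \<in> borel_measurable S" for i
    unfolding \<zeta>_def S_def by (rule measurable_component_singleton) auto
  have \<zeta>T: "\<zeta> i (T x) = g (x (e i))" if "i < n" for i x
    using that by (simp add: \<zeta>_def T_def)
  have NF: "integrable N F \<longleftrightarrow> integrable P (\<lambda>x. F (T x))" "(\<integral>\<omega>. F \<omega> \<partial>N) = (\<integral>x. F (T x) \<partial>P)"
    if "F \<in> borel_measurable S" for F :: "(nat \<Rightarrow> real) \<Rightarrow> real"
    unfolding N_def using integrable_distr_eq[OF Tm that] integral_distr[OF Tm that] by auto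
  have c1: "\<forall>i<n. \<zeta> i \<in> borel_measurable N" using \<zeta>m by (simp add: N_def)
  have c2: "prob_space.indep_vars N (\<lambda>_. borel) \<zeta> {..<n}"
    unfolding N_def
  proof (rule indep_vars_distr[OF _ Tm])
    show "prob_space P" by unfold_locales
    show "{..<n} \<noteq> {}" using n by auto
    show "\<zeta> i \<in> S \<rightarrow>\<^sub>M borel" for i by (rule \<zeta>m)
    have "prob_space.indep_vars P (\<lambda>_. borel) (\<lambda>i x. g (x (e i))) {..<n}"
      using P.indep_vars_compose2[OF PiM_coords_indep[OF mu e n, folded P_def], of "\<lambda>_. g" "\<lambda>_. borel"] g(1)
      by auto
    then show "prob_space.indep_vars P (\<lambda>_. borel) (\<lambda>i x. \<zeta> i (T x)) {..<n}"
      by (rule P.indep_vars_cong[THEN iffD1, rotated 3]) (auto simp: \<zeta>T)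
  qed
  have dN: "distr N borel (\<zeta> i) = distr \<mu> borel g" if "i < n" for i
  proof -
    have "distr N borel (\<zeta> i) = distr P borel (\<lambda>x. \<zeta> i (T x))"
      unfolding N_def using \<zeta>m Tm by (simp add: distr_distr comp_def)
    also have "\<dots> = distr P borel (\<lambda>x. g (x (e i)))"
      using that by (intro distr_cong) (auto simp: \<zeta>T)
    also have "\<dots> = distr (distr P \<mu> (\<lambda>x. x (e i))) borel g"
      using comp[OF eA[OF that]] g(1) by (simp add: distr_distr comp_def)
    also have "\<dots> = distr \<mu> borel g" using compd[OF eA[OF that]] by simp
    finally show ?thesis .
  qed
  have c3: "\<forall>i<n. distr N borel (\<zeta> i) = distr N borel (\<zeta> 0)" using dN n by auto
  have absm: "(\<lambda>t::real. \<bar>t\<bar> powr p) \<in> borel_measurable borel" by measurable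
  have c4: "integrable N (\<lambda>\<omega>. \<bar>\<zeta> 0 \<omega>\<bar> powr p)"
    and i4: "(\<integral>\<omega>. \<bar>\<zeta> 0 \<omega>\<bar> powr p \<partial>N) = (\<integral>x. \<bar>g x\<bar> powr p \<partial>\<mu>)"
  proof -
    have m: "(\<lambda>\<omega>. \<bar>\<zeta> 0 \<omega>\<bar> powr p) \<in> borel_measurable S" using \<zeta>m by measurable
    show "integrable N (\<lambda>\<omega>. \<bar>\<zeta> 0 \<omega>\<bar> powr p)"
      using NF(1)[OF m] \<zeta>T[OF n] int_comp(1)[OF eA[OF n] absm] g(2) by simp
    show "(\<integral>\<omega>. \<bar>\<zeta> 0 \<omega>\<bar> powr p \<partial>N) = (\<integral>x. \<bar>g x\<bar> powr p \<partial>\<mu>)"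
      using NF(2)[OF m] \<zeta>T[OF n] int_comp(2)[OF eA[OF n] absm] by simp
  qed
  have c5: "integrable N (\<zeta> 0)" "(\<integral>\<omega>. \<zeta> 0 \<omega> \<partial>N) = 0"
  proof -
    have idm: "(\<lambda>t::real. t) \<in> borel_measurable borel" by simp
    show "integrable N (\<zeta> 0)"
      using NF(1)[OF \<zeta>m] \<zeta>T[OF n] int_comp(1)[OF eA[OF n] idm] g(3) by simp
    show "(\<integral>\<omega>. \<zeta> 0 \<omega> \<partial>N) = 0"
      using NF(2)[OF \<zeta>m] \<zeta>T[OF n] int_comp(2)[OF eA[OF n] idm] g(4) by simp
  qed
  define c' where "c' = (\<lambda>i. c (e i))"
  have main: "lpnorm N p (\<lambda>\<omega>. \<Sum>i<n. c' i * \<zeta> i \<omega>)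
            \<le> ereal K * ereal (sqrt (\<Sum>i<n. (c' i)\<^sup>2)) * lpnorm N p (\<zeta> 0)"
    using K unfolding KRP_def using N.prob_space_axioms n c1 c2 c3 c4 c5 by blast
  have sq: "(\<Sum>i<n. (c' i)\<^sup>2) = (\<Sum>a\<in>A. (c a)\<^sup>2)"
    unfolding c'_def using sum.reindex_bij_betw[OF e, of "\<lambda>a. (c a)\<^sup>2"] by simp
  have sumT: "(\<Sum>i<n. c' i * \<zeta> i (T x)) = (\<Sum>a\<in>A. c a * g (x a))" for x
  proof -
    have "(\<Sum>i<n. c' i * \<zeta> i (T x)) = (\<Sum>i<n. c (e i) * g (x (e i)))"
      by (intro sum.cong) (auto simp: c'_def \<zeta>T)
    also have "\<dots> = (\<Sum>a\<in>A. c a * g (x a))"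
      using sum.reindex_bij_betw[OF e, of "\<lambda>a. c a * g (x a)"] by simp
    finally show ?thesis .
  qed
  define G where "G = (\<integral>x. \<bar>g x\<bar> powr p \<partial>\<mu>)"
  have G0: "G \<ge> 0" unfolding G_def by (intro integral_nonneg_AE) auto
  have l0: "lpnorm N p (\<zeta> 0) = ereal (G powr (1/p))"
    using c4 i4 by (simp add: lpnorm_def G_def)
  have sm: "(\<lambda>\<omega>. \<bar>\<Sum>i<n. c' i * \<zeta> i \<omega>\<bar> powr p) \<in> borel_measurable S" using \<zeta>m by measurable
  define s where "s = sqrt (\<Sum>a\<in>A. (c a)\<^sup>2)"
  have s0: "s \<ge> 0" by (simp add: s_def sum_nonneg)
  have main': "lpnorm N p (\<lambda>\<omega>. \<Sum>i<n. c' i * \<zeta> i \<omega>) \<le> ereal (K * s * G powr (1/p))"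
    using main unfolding l0 sq s_def[symmetric] by simp
  then have intN: "integrable N (\<lambda>\<omega>. \<bar>\<Sum>i<n. c' i * \<zeta> i \<omega>\<bar> powr p)"
    unfolding lpnorm_def by (cases "integrable N (\<lambda>\<omega>. \<bar>\<Sum>i<n. c' i * \<zeta> i \<omega>\<bar> powr p)") auto
  then show intP: "integrable P (\<lambda>x. \<bar>\<Sum>a\<in>A. c a * g (x a)\<bar> powr p)"
    using NF(1)[OF sm] by (simp add: sumT)
  define I where "I = (\<integral>x. \<bar>\<Sum>a\<in>A. c a * g (x a)\<bar> powr p \<partial>P)"
  have I0: "I \<ge> 0" unfolding I_def by (intro integral_nonneg_AE) auto
  have "I powr (1/p) \<le> K * s * G powr (1/p)"
    using main' intN NF(2)[OF sm] unfolding lpnorm_def I_def by (simp add: sumT)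
  also have "\<dots> \<le> \<bar>K\<bar> * s * G powr (1/p)"
    using s0 by (intro mult_right_mono) (auto intro: mult_right_mono)
  finally have "(I powr (1/p)) powr p \<le> (\<bar>K\<bar> * s * G powr (1/p)) powr p"
    using p by (intro powr_mono2) auto
  then have "I \<le> (\<bar>K\<bar> * s) powr p * (G powr (1/p)) powr p"
    using p I0 G0 s0 by (simp add: powr_powr powr_mult)
  then show "I \<le> (\<bar>K\<bar> * s) powr p * G"
    using p G0 by (simp add: powr_powr)
qed


lemma Lpn_cmult:
  fixes f :: "'a \<Rightarrow> real"
  assumes p: "p > 0"
  shows "Lpn N p (\<lambda>x. c * f x) = \<bar>c\<bar> * Lpn N p f"
proof -
  have "(\<integral>x. \<bar>c * f x\<bar> powr p \<partial>N) = \<bar>c\<bar> powr p * (\<integral>x. \<bar>f x\<bar> powr p \<partial>N)"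
    by (simp add: abs_mult powr_mult)
  moreover have "(\<integral>x. \<bar>f x\<bar> powr p \<partial>N) \<ge> 0" by (intro integral_nonneg_AE) auto
  ultimately show ?thesis using p
    by (simp add: Lpn_def powr_mult powr_powr)
qed

lemma integrable_cmult_powr:
  fixes f :: "'a \<Rightarrow> real"
  assumes "integrable N (\<lambda>x. \<bar>f x\<bar> powr p)"
  shows "integrable N (\<lambda>x. \<bar>c * f x\<bar> powr p)"
proof -
  have "(\<lambda>x. \<bar>c * f x\<bar> powr p) = (\<lambda>x. \<bar>c\<bar> powr p * \<bar>f x\<bar> powr p)"
    by (simp add: abs_mult powr_mult)
  then show ?thesis using assms by simp
qed

lemma Lpn_zero: "p > 0 \<Longrightarrow> Lpn N p (\<lambda>x. 0) = 0"
  by (simp add: Lpn_def)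

lemma minkowski_sum:
  fixes f :: "'i \<Rightarrow> 'a \<Rightarrow> real"
  assumes p: "p \<ge> 1" and I: "finite I"
    and m: "\<And>i. i \<in> I \<Longrightarrow> f i \<in> borel_measurable N"
    and int: "\<And>i. i \<in> I \<Longrightarrow> integrable N (\<lambda>x. \<bar>f i x\<bar> powr p)"
  shows "integrable N (\<lambda>x. \<bar>\<Sum>i\<in>I. f i x\<bar> powr p) \<and> Lpn N p (\<lambda>x. \<Sum>i\<in>I. f i x) \<le> (\<Sum>i\<in>I. Lpn N p (f i))"
  using I m int
proof (induction I rule: finite_induct)
  case empty
  then show ?case using p by (simp add: Lpn_zero)
next
  case (insert j I)
  have mI: "(\<lambda>x. \<Sum>i\<in>I. f i x) \<in> borel_measurable N" using insert by auto
  have mj: "f j \<in> borel_measurable N" using insert by auto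
  have IH: "integrable N (\<lambda>x. \<bar>\<Sum>i\<in>I. f i x\<bar> powr p)" "Lpn N p (\<lambda>x. \<Sum>i\<in>I. f i x) \<le> (\<Sum>i\<in>I. Lpn N p (f i))"
    using insert by auto
  have ij: "integrable N (\<lambda>x. \<bar>f j x\<bar> powr p)" using insert by auto
  have "integrable N (\<lambda>x. \<bar>f j x + (\<Sum>i\<in>I. f i x)\<bar> powr p)"
    by (rule minkowski_integrable[OF p mj mI ij IH(1)])
  moreover have "Lpn N p (\<lambda>x. f j x + (\<Sum>i\<in>I. f i x)) \<le> Lpn N p (f j) + Lpn N p (\<lambda>x. \<Sum>i\<in>I. f i x)"
    by (rule minkowski[OF p mj mI ij IH(1)])
  ultimately show ?case using IH(2) insert by simp
qed


lemma sq_abs_powr: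
  assumes "p > 0" shows "\<bar>(x::real)\<^sup>2\<bar> powr (p/2) = \<bar>x\<bar> powr p"
proof (cases "x = 0")
  case False
  have e: "\<bar>x\<^sup>2\<bar> = \<bar>x\<bar> powr 2" using False by (simp add: powr_realpow)
  show ?thesis unfolding e powr_powr by simp
qed (use assms in simp)

lemma sq_powr: "p > 0 \<Longrightarrow> (x::real)\<^sup>2 powr (p/2) = \<bar>x\<bar> powr p"
  using sq_abs_powr[of p x] by simp

lemma sqrt_powr': "s \<ge> 0 \<Longrightarrow> sqrt s powr p = s powr (p/2)"
  by (simp add: powr_half_sqrt[symmetric] powr_powr)

lemma core:
  fixes g :: "'x \<Rightarrow> real" and h :: "'y \<Rightarrow> real" and K :: real
  assumes M: "prob_space M" and mu: "prob_space \<mu>" and nu: "prob_space \<nu>"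
    and ind: "indep_laws M \<mu> \<nu> \<xi> \<eta>"
    and L: "finite L" "L \<noteq> {}" "L \<subseteq> {1..} \<times> {1..}"
    and p: "p \<ge> 2" and K0: "K \<ge> 0"
    and gm: "g \<in> borel_measurable \<mu>" and hm: "h \<in> borel_measurable \<nu>"
    and HG: "\<And>(A::nat set) c. finite A \<Longrightarrow> A \<noteq> {} \<Longrightarrow> card A \<le> card L \<Longrightarrow>
       integrable (PiM A (\<lambda>_. \<mu>)) (\<lambda>x. \<bar>\<Sum>a\<in>A. c a * g (x a)\<bar> powr p) \<and>
       (\<integral>x. \<bar>\<Sum>a\<in>A. c a * g (x a)\<bar> powr p \<partial>PiM A (\<lambda>_. \<mu>))
         \<le> (K * sqrt (\<Sum>a\<in>A. (c a)\<^sup>2)) powr p * (\<integral>x. \<bar>g x\<bar> powr p \<partial>\<mu>)"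
    and HH: "\<And>(A::nat set) c. finite A \<Longrightarrow> A \<noteq> {} \<Longrightarrow> card A \<le> card L \<Longrightarrow>
       integrable (PiM A (\<lambda>_. \<nu>)) (\<lambda>x. \<bar>\<Sum>a\<in>A. c a * h (x a)\<bar> powr p) \<and>
       (\<integral>x. \<bar>\<Sum>a\<in>A. c a * h (x a)\<bar> powr p \<partial>PiM A (\<lambda>_. \<nu>))
         \<le> (K * sqrt (\<Sum>a\<in>A. (c a)\<^sup>2)) powr p * (\<integral>x. \<bar>h x\<bar> powr p \<partial>\<nu>)"
  shows "integrable M (\<lambda>\<omega>. \<bar>\<Sum>(a,b)\<in>L. g (\<xi> a \<omega>) * h (\<eta> b \<omega>)\<bar> powr p) \<and>
    (\<integral>\<omega>. \<bar>\<Sum>(a,b)\<in>L. g (\<xi> a \<omega>) * h (\<eta> b \<omega>)\<bar> powr p \<partial>M)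
      \<le> K powr p * K powr p * real (card L) powr (p/2) * (\<integral>x. \<bar>g x\<bar> powr p \<partial>\<mu>) * (\<integral>x. \<bar>h x\<bar> powr p \<partial>\<nu>)"
proof -
  interpret M: prob_space M by fact
  define A where "A = fst ` L"
  define B where "B = snd ` L"
  have A: "finite A" "A \<noteq> {}" "A \<subseteq> {1..}" "card A \<le> card L"
    using L by (auto simp: A_def card_image_le)
  have B: "finite B" "B \<noteq> {}" "B \<subseteq> {1..}" "card B \<le> card L"
    using L by (auto simp: B_def card_image_le)
  define P1 where "P1 = PiM A (\<lambda>_. \<mu>)"
  define P2 where "P2 = PiM B (\<lambda>_. \<nu>)"
  interpret P1: prob_space P1 unfolding P1_def using mu by (intro prob_space_PiM) auto
  interpret P2: prob_space P2 unfolding P2_def using nu by (intro prob_space_PiM) auto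
  interpret P: pair_prob_space P1 P2 ..
  define G where "G = (\<integral>x. \<bar>g x\<bar> powr p \<partial>\<mu>)"
  define H where "H = (\<integral>x. \<bar>h x\<bar> powr p \<partial>\<nu>)"
  have G0: "G \<ge> 0" "H \<ge> 0" unfolding G_def H_def by (auto intro!: integral_nonneg_AE)
  define La where "La = (\<lambda>a. {b. (a, b) \<in> L})"
  have LaB: "La a \<subseteq> B" for a by (force simp: La_def B_def)
  have finLa: "finite (La a)" for a using LaB B(1) finite_subset by blast
  have Lsig: "L = Sigma A La" by (force simp: A_def La_def)
  define C where "C = (\<lambda>a y. \<Sum>b\<in>La a. h (y b))"
  define F where "F = (\<lambda>z::(nat \<Rightarrow> 'x) \<times> (nat \<Rightarrow> 'y). \<bar>\<Sum>(a,b)\<in>L. g (fst z a) * h (snd z b)\<bar> powr p)"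
  have F_alt: "F (x, y) = \<bar>\<Sum>a\<in>A. C a y * g (x a)\<bar> powr p" for x y
  proof -
    have "(\<Sum>(a,b)\<in>L. g (x a) * h (y b)) = (\<Sum>a\<in>A. \<Sum>b\<in>La a. g (x a) * h (y b))"
      unfolding Lsig using A(1) finLa by (subst sum.Sigma) auto
    also have "\<dots> = (\<Sum>a\<in>A. C a y * g (x a))"
      by (simp add: C_def sum_distrib_left sum_distrib_right mult.commute)
    finally show ?thesis by (simp add: F_def)
  qed
  have C_alt: "C a y = (\<Sum>b\<in>B. (if b \<in> La a then 1 else 0) * h (y b))" for a y
    unfolding C_def using LaB B(1)
    by (intro sum.mono_neutral_cong_left) auto
  have C_sq: "(\<Sum>b\<in>B. (if b \<in> La a then 1 else 0 :: real)\<^sup>2) = real (card (La a))" for a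
  proof -
    have "(\<Sum>b\<in>B. (if b \<in> La a then 1 else 0 :: real)\<^sup>2) = (\<Sum>b\<in>La a. 1)"
      using LaB B(1) by (intro sum.mono_neutral_cong_right) auto
    then show ?thesis by simp
  qed
  have compA: "(\<lambda>x. x a) \<in> P1 \<rightarrow>\<^sub>M \<mu>" if "a \<in> A" for a
    unfolding P1_def using that by (intro measurable_component_singleton)
  have compB: "(\<lambda>x. x b) \<in> P2 \<rightarrow>\<^sub>M \<nu>" if "b \<in> B" for b
    unfolding P2_def using that by (intro measurable_component_singleton)
  have Cm: "C a \<in> borel_measurable P2" for a
    unfolding C_def using LaB
    by (intro borel_measurable_sum measurable_compose[OF compB hm]) auto
  have Fm: "F \<in> borel_measurable (P1 \<Otimes>\<^sub>M P2)"
  proof -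
    have "(\<lambda>z. \<Sum>(a,b)\<in>L. g (fst z a) * h (snd z b)) \<in> borel_measurable (P1 \<Otimes>\<^sub>M P2)"
    proof (intro borel_measurable_sum)
      fix ab assume "ab \<in> L"
      then obtain a b where ab: "ab = (a, b)" "a \<in> A" "b \<in> B"
        by (cases ab) (force simp: A_def B_def)
      have "(\<lambda>z. g (fst z a)) \<in> borel_measurable (P1 \<Otimes>\<^sub>M P2)"
        using measurable_compose[OF measurable_fst[of P1 P2] measurable_compose[OF compA[OF ab(2)] gm]] by simp
      moreover have "(\<lambda>z. h (snd z b)) \<in> borel_measurable (P1 \<Otimes>\<^sub>M P2)"
        using measurable_compose[OF measurable_snd[of P1 P2] measurable_compose[OF compB[OF ab(3)] hm]] by simp
      ultimately show "(\<lambda>z. case ab of (a, b) \<Rightarrow> g (fst z a) * h (snd z b)) \<in> borel_measurable (P1 \<Otimes>\<^sub>M P2)"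
        unfolding ab by simp
    qed
    then show ?thesis unfolding F_def by measurable
  qed
  define \<Phi> where "\<Phi> = (\<lambda>\<omega>. (\<lambda>i\<in>A. \<xi> i \<omega>, \<lambda>j\<in>B. \<eta> j \<omega>))"
  have distr_eq: "distr M (P1 \<Otimes>\<^sub>M P2) \<Phi> = P1 \<Otimes>\<^sub>M P2"
    unfolding \<Phi>_def P1_def P2_def by (rule indep_transfer[OF M mu nu ind A(1,3) B(1,3)])
  have \<Phi>m: "\<Phi> \<in> M \<rightarrow>\<^sub>M P1 \<Otimes>\<^sub>M P2"
  proof -
    have "\<xi> i \<in> M \<rightarrow>\<^sub>M \<mu>" if "i \<in> A" for i using indep_laws_meas(1)[OF ind] A that by auto
    moreover have "\<eta> j \<in> M \<rightarrow>\<^sub>M \<nu>" if "j \<in> B" for j using indep_laws_meas(2)[OF ind] B that by auto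
    ultimately show ?thesis unfolding \<Phi>_def P1_def P2_def
      by (intro measurable_Pair measurable_restrict) auto
  qed
  define X where "X = (\<lambda>\<omega>. \<bar>\<Sum>(a,b)\<in>L. g (\<xi> a \<omega>) * h (\<eta> b \<omega>)\<bar> powr p)"
  have XF: "X \<omega> = F (\<Phi> \<omega>)" for \<omega>
  proof -
    have "(\<Sum>(a,b)\<in>L. g (\<xi> a \<omega>) * h (\<eta> b \<omega>)) = (\<Sum>(a,b)\<in>L. g (fst (\<Phi> \<omega>) a) * h (snd (\<Phi> \<omega>) b))"
    proof (intro sum.cong refl)
      fix ab assume "ab \<in> L"
      then show "(case ab of (a, b) \<Rightarrow> g (\<xi> a \<omega>) * h (\<eta> b \<omega>)) =
          (case ab of (a, b) \<Rightarrow> g (fst (\<Phi> \<omega>) a) * h (snd (\<Phi> \<omega>) b))"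
        by (cases ab) (force simp: \<Phi>_def A_def B_def)
    qed
    then show ?thesis by (simp add: X_def F_def)
  qed
  have Xm: "X \<in> borel_measurable M"
    unfolding XF[abs_def] using Fm \<Phi>m by measurable
  have nnX: "(\<integral>\<^sup>+\<omega>. ennreal (X \<omega>) \<partial>M) = (\<integral>\<^sup>+z. ennreal (F z) \<partial>(P1 \<Otimes>\<^sub>M P2))"
  proof -
    have "(\<integral>\<^sup>+z. ennreal (F z) \<partial>(P1 \<Otimes>\<^sub>M P2)) = (\<integral>\<^sup>+z. ennreal (F z) \<partial>distr M (P1 \<Otimes>\<^sub>M P2) \<Phi>)"
      by (simp add: distr_eq)
    also have "\<dots> = (\<integral>\<^sup>+\<omega>. ennreal (F (\<Phi> \<omega>)) \<partial>M)"
      using Fm \<Phi>m by (intro nn_integral_distr) auto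
    finally show ?thesis by (simp add: XF)
  qed
  also have "\<dots> = (\<integral>\<^sup>+y. \<integral>\<^sup>+x. ennreal (F (x, y)) \<partial>P1 \<partial>P2)"
    using Fm by (intro P.nn_integral_snd[symmetric]) auto
  also have "\<dots> \<le> (\<integral>\<^sup>+y. ennreal (K powr p * G * (\<Sum>a\<in>A. (C a y)\<^sup>2) powr (p/2)) \<partial>P2)"
  proof (intro nn_integral_mono)
    fix y
    have h1: "integrable P1 (\<lambda>x. \<bar>\<Sum>a\<in>A. C a y * g (x a)\<bar> powr p)"
      and h2: "(\<integral>x. \<bar>\<Sum>a\<in>A. C a y * g (x a)\<bar> powr p \<partial>P1)
         \<le> (K * sqrt (\<Sum>a\<in>A. (C a y)\<^sup>2)) powr p * G"
      using HG[OF A(1,2,4), of "\<lambda>a. C a y"] unfolding P1_def G_def by auto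
    have "(\<integral>\<^sup>+x. ennreal (F (x, y)) \<partial>P1) = ennreal (\<integral>x. \<bar>\<Sum>a\<in>A. C a y * g (x a)\<bar> powr p \<partial>P1)"
      unfolding F_alt using h1 by (intro nn_integral_eq_integral) auto
    also have "\<dots> \<le> ennreal ((K * sqrt (\<Sum>a\<in>A. (C a y)\<^sup>2)) powr p * G)"
      using h2 by (rule ennreal_leI)
    also have "(K * sqrt (\<Sum>a\<in>A. (C a y)\<^sup>2)) powr p * G = K powr p * G * (\<Sum>a\<in>A. (C a y)\<^sup>2) powr (p/2)"
      using K0 by (simp add: powr_mult sqrt_powr' sum_nonneg)
    finally show "(\<integral>\<^sup>+x. ennreal (F (x, y)) \<partial>P1) \<le> ennreal (K powr p * G * (\<Sum>a\<in>A. (C a y)\<^sup>2) powr (p/2))" .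
  qed
  also have "\<dots> = ennreal (K powr p * G) * (\<integral>\<^sup>+y. ennreal ((\<Sum>a\<in>A. (C a y)\<^sup>2) powr (p/2)) \<partial>P2)"
  proof -
    have Sm: "(\<lambda>y. ennreal ((\<Sum>a\<in>A. (C a y)\<^sup>2) powr (p/2))) \<in> borel_measurable P2" using Cm by measurable
    show ?thesis
      using G0 by (subst nn_integral_cmult[symmetric, OF Sm]) (auto simp: ennreal_mult intro!: nn_integral_cong)
  qed
  also have "(\<integral>\<^sup>+y. ennreal ((\<Sum>a\<in>A. (C a y)\<^sup>2) powr (p/2)) \<partial>P2)
      \<le> ennreal (K powr p * real (card L) powr (p/2) * H)"
  proof -
    define q where "q = p / 2"
    have q: "q \<ge> 1" "q > 0" using p by (auto simp: q_def)
    have Ci: "integrable P2 (\<lambda>y. \<bar>C a y\<bar> powr p)"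
      and Cb: "(\<integral>y. \<bar>C a y\<bar> powr p \<partial>P2) \<le> (K * sqrt (real (card (La a)))) powr p * H" if "a \<in> A" for a
      using HH[OF B(1,2,4), of "\<lambda>b. if b \<in> La a then 1 else 0"]
      unfolding P2_def[symmetric] H_def[symmetric] C_alt[symmetric] C_sq by auto
    have fi: "integrable P2 (\<lambda>y. \<bar>(C a y)\<^sup>2\<bar> powr q)" if "a \<in> A" for a
      using Ci[OF that] q by (simp add: q_def sq_abs_powr sq_powr)
    have fm: "(\<lambda>y. (C a y)\<^sup>2) \<in> borel_measurable P2" for a using Cm by measurable
    have mink: "integrable P2 (\<lambda>y. \<bar>\<Sum>a\<in>A. (C a y)\<^sup>2\<bar> powr q) \<and>
        Lpn P2 q (\<lambda>y. \<Sum>a\<in>A. (C a y)\<^sup>2) \<le> (\<Sum>a\<in>A. Lpn P2 q (\<lambda>y. (C a y)\<^sup>2))"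
      by (rule minkowski_sum[OF q(1) A(1) fm fi])
    have each: "Lpn P2 q (\<lambda>y. (C a y)\<^sup>2) \<le> K powr 2 * real (card (La a)) * H powr (2/p)" if "a \<in> A" for a
    proof -
      have "Lpn P2 q (\<lambda>y. (C a y)\<^sup>2) = (\<integral>y. \<bar>C a y\<bar> powr p \<partial>P2) powr (2/p)"
        using q by (simp add: Lpn_def q_def sq_abs_powr sq_powr)
      also have "\<dots> \<le> ((K * sqrt (real (card (La a)))) powr p * H) powr (2/p)"
        using Cb[OF that] p by (intro powr_mono2) (auto intro!: integral_nonneg_AE)
      also have "\<dots> = K powr 2 * real (card (La a)) * H powr (2/p)"
        using p K0 G0 by (simp add: powr_mult powr_powr sqrt_powr')
      finally show ?thesis .
    qed
    have "(\<Sum>a\<in>A. Lpn P2 q (\<lambda>y. (C a y)\<^sup>2)) \<le> (\<Sum>a\<in>A. K powr 2 * real (card (La a)) * H powr (2/p))"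
      using each by (rule sum_mono)
    also have "\<dots> = K powr 2 * real (card L) * H powr (2/p)"
    proof -
      have "card L = (\<Sum>a\<in>A. card (La a))" unfolding Lsig using A(1) finLa by (simp add: card_SigmaI)
      then show ?thesis by (simp add: sum_distrib_left sum_distrib_right)
    qed
    finally have Lq: "Lpn P2 q (\<lambda>y. \<Sum>a\<in>A. (C a y)\<^sup>2) \<le> K powr 2 * real (card L) * H powr (2/p)"
      using mink by linarith
    have Sabs: "\<bar>\<Sum>a\<in>A. (C a y)\<^sup>2\<bar> = (\<Sum>a\<in>A. (C a y)\<^sup>2)" for y by (simp add: sum_nonneg)
    have "(\<integral>\<^sup>+y. ennreal ((\<Sum>a\<in>A. (C a y)\<^sup>2) powr (p/2)) \<partial>P2) = ennreal (\<integral>y. (\<Sum>a\<in>A. (C a y)\<^sup>2) powr q \<partial>P2)"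
      using mink unfolding q_def Sabs by (intro nn_integral_eq_integral) auto
    also have "(\<integral>y. (\<Sum>a\<in>A. (C a y)\<^sup>2) powr q \<partial>P2) = Lpn P2 q (\<lambda>y. \<Sum>a\<in>A. (C a y)\<^sup>2) powr q"
      using q by (simp add: Lpn_pow Sabs)
    also have "\<dots> \<le> (K powr 2 * real (card L) * H powr (2/p)) powr q"
      using Lq q by (intro powr_mono2) (auto simp: Lpn_nonneg)
    also have "\<dots> = K powr p * real (card L) powr (p/2) * H"
      using K0 G0 p using sq_powr[of p K] by (simp add: q_def powr_mult powr_powr)
    finally have fin: "(\<And>x y. x \<le> y \<Longrightarrow> ennreal x \<le> ennreal y) \<Longrightarrow> (\<integral>\<^sup>+y. ennreal ((\<Sum>a\<in>A. (C a y)\<^sup>2) powr (p/2)) \<partial>P2) \<le> ennreal (K powr p * real (card L) powr (p/2) * H)" .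
    show ?thesis by (rule fin[OF ennreal_leI])
  qed
  finally have nnb: "(\<integral>\<^sup>+\<omega>. ennreal (X \<omega>) \<partial>M) \<le> ennreal (K powr p * G) * ennreal (K powr p * real (card L) powr (p/2) * H)"
    by (simp add: mult_left_mono)
  have bnd: "ennreal (K powr p * G) * ennreal (K powr p * real (card L) powr (p/2) * H)
      = ennreal (K powr p * K powr p * real (card L) powr (p/2) * G * H)"
    using G0 by (simp add: ennreal_mult[symmetric] mult_ac)
  have X0: "X \<omega> \<ge> 0" for \<omega> by (simp add: X_def)
  have intX: "integrable M X"
    using nnb bnd Xm X0 by (intro integrableI_nonneg) (auto simp: top_unique less_top[symmetric])
  have "ennreal (integral\<^sup>L M X) \<le> ennreal (K powr p * K powr p * real (card L) powr (p/2) * G * H)"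
    using nnb bnd nn_integral_eq_integral[OF intX] X0 by simp
  then have "integral\<^sup>L M X \<le> K powr p * K powr p * real (card L) powr (p/2) * G * H"
    using G0 K0 by (subst (asm) ennreal_le_iff) auto
  then show ?thesis using intX unfolding X_def G_def H_def by simp
qed


lemma lpnorm_nonneg: "lpnorm M p f \<ge> 0"
  by (simp add: lpnorm_def)

lemma KRP_mono: "KRP K p \<Longrightarrow> K \<le> K' \<Longrightarrow> KRP K' p"
  unfolding KRP_def
proof (intro allI impI)
  fix M :: "(nat \<Rightarrow> real) measure" and n c and \<zeta> :: "nat \<Rightarrow> (nat \<Rightarrow> real) \<Rightarrow> real"
  assume K: "\<forall>(M :: (nat \<Rightarrow> real) measure) (n::nat) (c :: nat \<Rightarrow> real)
      (\<zeta> :: nat \<Rightarrow> (nat \<Rightarrow> real) \<Rightarrow> real).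
      prob_space M \<and> 0 < n \<and>
      (\<forall>i<n. \<zeta> i \<in> borel_measurable M) \<and>
      prob_space.indep_vars M (\<lambda>_. borel) \<zeta> {..<n} \<and>
      (\<forall>i<n. distr M borel (\<zeta> i) = distr M borel (\<zeta> 0)) \<and>
      integrable M (\<lambda>\<omega>. \<bar>\<zeta> 0 \<omega>\<bar> powr p) \<and>
      integrable M (\<zeta> 0) \<and> (\<integral>\<omega>. \<zeta> 0 \<omega> \<partial>M) = 0
      \<longrightarrow> lpnorm M p (\<lambda>\<omega>. \<Sum>i<n. c i * \<zeta> i \<omega>)
            \<le> ereal K * ereal (sqrt (\<Sum>i<n. (c i)\<^sup>2)) * lpnorm M p (\<zeta> 0)"
    and KK: "K \<le> K'"
    and H: "prob_space M \<and> 0 < n \<and>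
      (\<forall>i<n. \<zeta> i \<in> borel_measurable M) \<and>
      prob_space.indep_vars M (\<lambda>_. borel) \<zeta> {..<n} \<and>
      (\<forall>i<n. distr M borel (\<zeta> i) = distr M borel (\<zeta> 0)) \<and>
      integrable M (\<lambda>\<omega>. \<bar>\<zeta> 0 \<omega>\<bar> powr p) \<and>
      integrable M (\<zeta> 0) \<and> (\<integral>\<omega>. \<zeta> 0 \<omega> \<partial>M) = 0"
  have "lpnorm M p (\<lambda>\<omega>. \<Sum>i<n. c i * \<zeta> i \<omega>) \<le> ereal K * ereal (sqrt (\<Sum>i<n. (c i)\<^sup>2)) * lpnorm M p (\<zeta> 0)"
    by (rule K[rule_format, OF H])
  also have "\<dots> \<le> ereal K' * ereal (sqrt (\<Sum>i<n. (c i)\<^sup>2)) * lpnorm M p (\<zeta> 0)"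
    by (intro ereal_mult_right_mono lpnorm_nonneg) (use KK in \<open>auto intro!: ereal_mult_right_mono simp: sum_nonneg\<close>)
  finally show "lpnorm M p (\<lambda>\<omega>. \<Sum>i<n. c i * \<zeta> i \<omega>) \<le> ereal K' * ereal (sqrt (\<Sum>i<n. (c i)\<^sup>2)) * lpnorm M p (\<zeta> 0)" .
qed

definition Hyp :: "'x measure \<Rightarrow> real \<Rightarrow> real \<Rightarrow> nat \<Rightarrow> bool" where
  "Hyp \<mu> p K m \<longleftrightarrow> (\<forall>g::'x \<Rightarrow> real. g \<in> borel_measurable \<mu> \<and> integrable \<mu> (\<lambda>x. \<bar>g x\<bar> powr p)
     \<and> integrable \<mu> g \<and> (\<integral>x. g x \<partial>\<mu>) = 0 \<longrightarrow>
     (\<forall>(A::nat set) c. finite A \<and> A \<noteq> {} \<and> card A \<le> m \<longrightarrow>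
       integrable (PiM A (\<lambda>_. \<mu>)) (\<lambda>x. \<bar>\<Sum>a\<in>A. c a * g (x a)\<bar> powr p) \<and>
       (\<integral>x. \<bar>\<Sum>a\<in>A. c a * g (x a)\<bar> powr p \<partial>PiM A (\<lambda>_. \<mu>))
         \<le> (K * sqrt (\<Sum>a\<in>A. (c a)\<^sup>2)) powr p * (\<integral>x. \<bar>g x\<bar> powr p \<partial>\<mu>)))"

lemma Hyp_KR:
  assumes "KRP K p" "p \<ge> 1" "prob_space \<mu>"
  shows "Hyp \<mu> p \<bar>K\<bar> m"
  unfolding Hyp_def
proof (intro allI impI)
  fix g :: "'a \<Rightarrow> real" and A :: "nat set" and c :: "nat \<Rightarrow> real"
  assume g: "g \<in> borel_measurable \<mu> \<and> integrable \<mu> (\<lambda>x. \<bar>g x\<bar> powr p) \<and> integrable \<mu> g \<and> (\<integral>x. g x \<partial>\<mu>) = 0"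
    and A: "finite A \<and> A \<noteq> {} \<and> card A \<le> m"
  from g have g1: "g \<in> borel_measurable \<mu>" and g2: "integrable \<mu> (\<lambda>x. \<bar>g x\<bar> powr p)"
    and g3: "integrable \<mu> g" and g4: "(\<integral>x. g x \<partial>\<mu>) = 0" by auto
  from A have A1: "finite A" and A2: "A \<noteq> {}" by auto
  show "integrable (PiM A (\<lambda>_. \<mu>)) (\<lambda>x. \<bar>\<Sum>a\<in>A. c a * g (x a)\<bar> powr p) \<and>
       (\<integral>x. \<bar>\<Sum>a\<in>A. c a * g (x a)\<bar> powr p \<partial>PiM A (\<lambda>_. \<mu>))
         \<le> (\<bar>K\<bar> * sqrt (\<Sum>a\<in>A. (c a)\<^sup>2)) powr p * (\<integral>x. \<bar>g x\<bar> powr p \<partial>\<mu>)"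
    using KR_apply[OF assms g1 g2 g3 g4 A1 A2, of c] by (intro conjI)
qed

lemma Hyp_crude:
  assumes p: "p \<ge> 1" and mu: "prob_space \<mu>"
  shows "Hyp \<mu> p (sqrt (real m)) m"
  unfolding Hyp_def
proof (intro allI impI conjI)
  fix g :: "'a \<Rightarrow> real" and A :: "nat set" and c :: "nat \<Rightarrow> real"
  assume g: "g \<in> borel_measurable \<mu> \<and> integrable \<mu> (\<lambda>x. \<bar>g x\<bar> powr p) \<and> integrable \<mu> g \<and> (\<integral>x. g x \<partial>\<mu>) = 0"
    and A: "finite A \<and> A \<noteq> {} \<and> card A \<le> m"
  define P where "P = PiM A (\<lambda>_. \<mu>)"
  have comp: "(\<lambda>x. x a) \<in> P \<rightarrow>\<^sub>M \<mu>" if "a \<in> A" for a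
    unfolding P_def using that by (intro measurable_component_singleton)
  have compd: "distr P \<mu> (\<lambda>x. x a) = \<mu>" if "a \<in> A" for a
    unfolding P_def using mu that by (intro distr_PiM_component) auto
  have gm: "g \<in> borel_measurable \<mu>" using g by blast
  have absm: "(\<lambda>x. \<bar>g x\<bar> powr p) \<in> borel_measurable \<mu>" using gm by measurable
  have ga: "integrable P (\<lambda>x. \<bar>g (x a)\<bar> powr p)" "(\<integral>x. \<bar>g (x a)\<bar> powr p \<partial>P) = (\<integral>x. \<bar>g x\<bar> powr p \<partial>\<mu>)"
    if "a \<in> A" for a
    using integrable_distr_eq[OF comp[OF that] absm] integral_distr[OF comp[OF that] absm] compd[OF that] g
    by auto
  have fm: "(\<lambda>x. c a * g (x a)) \<in> borel_measurable P" if "a \<in> A" for a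
    using measurable_compose[OF comp[OF that] gm] by simp
  have fi: "integrable P (\<lambda>x. \<bar>c a * g (x a)\<bar> powr p)" if "a \<in> A" for a
    using integrable_cmult_powr[OF ga(1)[OF that]] .
  have mk: "integrable P (\<lambda>x. \<bar>\<Sum>a\<in>A. c a * g (x a)\<bar> powr p) \<and>
      Lpn P p (\<lambda>x. \<Sum>a\<in>A. c a * g (x a)) \<le> (\<Sum>a\<in>A. Lpn P p (\<lambda>x. c a * g (x a)))"
  proof -
    from A have "finite A" by simp
    from minkowski_sum[where f="\<lambda>a x. c a * g (x a)" and N=P, OF p this fm fi] show ?thesis .
  qed
  then show "integrable (PiM A (\<lambda>_. \<mu>)) (\<lambda>x. \<bar>\<Sum>a\<in>A. c a * g (x a)\<bar> powr p)"
    unfolding P_def by blast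
  define G where "G = (\<integral>x. \<bar>g x\<bar> powr p \<partial>\<mu>)"
  have G0: "G \<ge> 0" unfolding G_def by (intro integral_nonneg_AE) auto
  have each: "Lpn P p (\<lambda>x. c a * g (x a)) = \<bar>c a\<bar> * G powr (1/p)" if "a \<in> A" for a
  proof -
    have "Lpn P p (\<lambda>x. c a * g (x a)) = \<bar>c a\<bar> * Lpn P p (\<lambda>x. g (x a))"
      using p by (intro Lpn_cmult) auto
    also have "Lpn P p (\<lambda>x. g (x a)) = G powr (1/p)"
      using ga(2)[OF that] by (simp add: Lpn_def G_def)
    finally show ?thesis .
  qed
  have "(\<Sum>a\<in>A. \<bar>c a\<bar>) \<le> sqrt (real m) * sqrt (\<Sum>a\<in>A. (c a)\<^sup>2)"
  proof -
    have "(\<Sum>a\<in>A. \<bar>c a\<bar> * 1)\<^sup>2 \<le> (\<Sum>a\<in>A. \<bar>c a\<bar>\<^sup>2) * (\<Sum>a\<in>A. 1\<^sup>2)"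
      by (rule Cauchy_Schwarz_ineq_sum)
    also have "\<dots> \<le> (\<Sum>a\<in>A. (c a)\<^sup>2) * real m"
      using A by (simp add: mult_left_mono sum_nonneg)
    finally have "(\<Sum>a\<in>A. \<bar>c a\<bar>)\<^sup>2 \<le> real m * (\<Sum>a\<in>A. (c a)\<^sup>2)" by (simp add: mult.commute)
    then have "sqrt ((\<Sum>a\<in>A. \<bar>c a\<bar>)\<^sup>2) \<le> sqrt (real m * (\<Sum>a\<in>A. (c a)\<^sup>2))"
      by (rule real_sqrt_le_mono)
    then show ?thesis by (simp add: real_sqrt_mult sum_nonneg)
  qed
  then have "(\<Sum>a\<in>A. Lpn P p (\<lambda>x. c a * g (x a))) \<le> sqrt (real m) * sqrt (\<Sum>a\<in>A. (c a)\<^sup>2) * G powr (1/p)"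
    using each G0 by (simp add: sum_distrib_right[symmetric] mult_right_mono)
  with mk have "Lpn P p (\<lambda>x. \<Sum>a\<in>A. c a * g (x a)) \<le> sqrt (real m) * sqrt (\<Sum>a\<in>A. (c a)\<^sup>2) * G powr (1/p)"
    by linarith
  then have "Lpn P p (\<lambda>x. \<Sum>a\<in>A. c a * g (x a)) powr p \<le> (sqrt (real m) * sqrt (\<Sum>a\<in>A. (c a)\<^sup>2) * G powr (1/p)) powr p"
    using p by (intro powr_mono2) (auto simp: Lpn_nonneg)
  then show "(\<integral>x. \<bar>\<Sum>a\<in>A. c a * g (x a)\<bar> powr p \<partial>PiM A (\<lambda>_. \<mu>))
         \<le> (sqrt (real m) * sqrt (\<Sum>a\<in>A. (c a)\<^sup>2)) powr p * (\<integral>x. \<bar>g x\<bar> powr p \<partial>\<mu>)"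
    using p G0 by (simp add: Lpn_pow P_def powr_mult powr_powr G_def[symmetric] sum_nonneg)
qed

lemma pair_law:
  assumes M: "prob_space M" and mu: "prob_space \<mu>" and nu: "prob_space \<nu>"
    and ind: "indep_laws M \<mu> \<nu> \<xi> \<eta>" and ab: "a \<ge> 1" "b \<ge> 1"
  shows "distr M (\<mu> \<Otimes>\<^sub>M \<nu>) (\<lambda>\<omega>. (\<xi> a \<omega>, \<eta> b \<omega>)) = \<mu> \<Otimes>\<^sub>M \<nu>"
proof -
  interpret M: prob_space M by fact
  have mx: "\<xi> a \<in> M \<rightarrow>\<^sub>M \<mu>" "\<eta> b \<in> M \<rightarrow>\<^sub>M \<nu>" using indep_laws_meas[OF ind] ab by auto
  have Fm: "(\<lambda>\<omega>. (\<xi> a \<omega>, \<eta> b \<omega>)) \<in> M \<rightarrow>\<^sub>M \<mu> \<Otimes>\<^sub>M \<nu>" using mx by measurable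
  show ?thesis
  proof (rule pair_measure_eqI[THEN sym])
    show "sigma_finite_measure \<mu>" "sigma_finite_measure \<nu>" using mu nu by (auto intro: prob_space_imp_sigma_finite)
    show "sets (\<mu> \<Otimes>\<^sub>M \<nu>) = sets (distr M (\<mu> \<Otimes>\<^sub>M \<nu>) (\<lambda>\<omega>. (\<xi> a \<omega>, \<eta> b \<omega>)))" by simp
  next
    fix X Y assume XY: "X \<in> sets \<mu>" "Y \<in> sets \<nu>"
    have "\<forall>I J A B. finite I \<and> finite J \<and> I \<subseteq> {1..} \<and> J \<subseteq> {1..} \<and>
        (\<forall>i\<in>I. A i \<in> sets \<mu>) \<and> (\<forall>j\<in>J. B j \<in> sets \<nu>) \<longrightarrow>
        measure M ((\<Inter>i\<in>I. \<xi> i -` A i) \<inter> (\<Inter>j\<in>J. \<eta> j -` B j) \<inter> space M)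
          = (\<Prod>i\<in>I. measure \<mu> (A i)) * (\<Prod>j\<in>J. measure \<nu> (B j))"
      using ind unfolding indep_laws_def by (elim conjE)
    from this[rule_format, of "{a}" "{b}" "\<lambda>_. X" "\<lambda>_. Y"]
    have m: "measure M (\<xi> a -` X \<inter> \<eta> b -` Y \<inter> space M) = measure \<mu> X * measure \<nu> Y"
      using XY ab by simp
    have pre: "(\<lambda>\<omega>. (\<xi> a \<omega>, \<eta> b \<omega>)) -` (X \<times> Y) \<inter> space M = \<xi> a -` X \<inter> \<eta> b -` Y \<inter> space M" by auto
    have "emeasure (distr M (\<mu> \<Otimes>\<^sub>M \<nu>) (\<lambda>\<omega>. (\<xi> a \<omega>, \<eta> b \<omega>))) (X \<times> Y)
        = emeasure M (\<xi> a -` X \<inter> \<eta> b -` Y \<inter> space M)"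
      using XY by (subst emeasure_distr[OF Fm]) (auto simp: pre)
    also have "\<dots> = ennreal (measure \<mu> X * measure \<nu> Y)" by (simp add: M.emeasure_eq_measure m)
    also have "\<dots> = emeasure \<mu> X * emeasure \<nu> Y"
      using mu nu by (simp add: finite_measure.emeasure_eq_measure prob_space.finite_measure ennreal_mult)
    finally show "emeasure \<mu> X * emeasure \<nu> Y = emeasure (distr M (\<mu> \<Otimes>\<^sub>M \<nu>) (\<lambda>\<omega>. (\<xi> a \<omega>, \<eta> b \<omega>))) (X \<times> Y)" ..
  qed
qed


lemma pair_Lp:
  fixes F :: "'x \<times> 'y \<Rightarrow> real"
  assumes M: "prob_space M" and mu: "prob_space \<mu>" and nu: "prob_space \<nu>"
    and ind: "indep_laws M \<mu> \<nu> \<xi> \<eta>" and ab: "a \<ge> 1" "b \<ge> 1"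
    and Fm: "F \<in> borel_measurable (\<mu> \<Otimes>\<^sub>M \<nu>)"
    and Fi: "integrable (\<mu> \<Otimes>\<^sub>M \<nu>) (\<lambda>z. \<bar>F z\<bar> powr p)"
  shows "integrable M (\<lambda>\<omega>. \<bar>F (\<xi> a \<omega>, \<eta> b \<omega>)\<bar> powr p)"
    "Lpn M p (\<lambda>\<omega>. F (\<xi> a \<omega>, \<eta> b \<omega>)) = Lpn (\<mu> \<Otimes>\<^sub>M \<nu>) p F"
proof -
  have mx: "\<xi> a \<in> M \<rightarrow>\<^sub>M \<mu>" "\<eta> b \<in> M \<rightarrow>\<^sub>M \<nu>" using indep_laws_meas[OF ind] ab by auto
  have Tm: "(\<lambda>\<omega>. (\<xi> a \<omega>, \<eta> b \<omega>)) \<in> M \<rightarrow>\<^sub>M \<mu> \<Otimes>\<^sub>M \<nu>" using mx by measurable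
  have am: "(\<lambda>z. \<bar>F z\<bar> powr p) \<in> borel_measurable (\<mu> \<Otimes>\<^sub>M \<nu>)" using Fm by measurable
  have d: "distr M (\<mu> \<Otimes>\<^sub>M \<nu>) (\<lambda>\<omega>. (\<xi> a \<omega>, \<eta> b \<omega>)) = \<mu> \<Otimes>\<^sub>M \<nu>"
    by (rule pair_law[OF M mu nu ind ab])
  show "integrable M (\<lambda>\<omega>. \<bar>F (\<xi> a \<omega>, \<eta> b \<omega>)\<bar> powr p)"
    using integrable_distr_eq[OF Tm am] Fi d by simp
  show "Lpn M p (\<lambda>\<omega>. F (\<xi> a \<omega>, \<eta> b \<omega>)) = Lpn (\<mu> \<Otimes>\<^sub>M \<nu>) p F"
    using integral_distr[OF Tm am] d by (simp add: Lpn_def)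
qed

lemma Y_bound:
  fixes g :: "'x \<Rightarrow> real" and h :: "'y \<Rightarrow> real"
  assumes M: "prob_space M" and mu: "prob_space \<mu>" and nu: "prob_space \<nu>"
    and ind: "indep_laws M \<mu> \<nu> \<xi> \<eta>"
    and L: "finite L" "L \<noteq> {}" "L \<subseteq> {1..} \<times> {1..}"
    and p: "p \<ge> 2" and K0: "K \<ge> 0"
    and Hg: "Hyp \<mu> p K (card L)" and Hh: "Hyp \<nu> p K (card L)"
    and g: "g \<in> borel_measurable \<mu>" "integrable \<mu> (\<lambda>x. \<bar>g x\<bar> powr p)" "integrable \<mu> g" "(\<integral>x. g x \<partial>\<mu>) = 0"
    and h: "h \<in> borel_measurable \<nu>" "integrable \<nu> (\<lambda>x. \<bar>h x\<bar> powr p)" "integrable \<nu> h" "(\<integral>x. h x \<partial>\<nu>) = 0"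
  shows "integrable M (\<lambda>\<omega>. \<bar>1 / sqrt (real (card L)) * (\<Sum>(a,b)\<in>L. g (\<xi> a \<omega>) * h (\<eta> b \<omega>))\<bar> powr p)"
    "Lpn M p (\<lambda>\<omega>. 1 / sqrt (real (card L)) * (\<Sum>(a,b)\<in>L. g (\<xi> a \<omega>) * h (\<eta> b \<omega>)))
       \<le> K\<^sup>2 * Lpn \<mu> p g * Lpn \<nu> p h"
proof -
  have HG: "integrable (PiM A (\<lambda>_. \<mu>)) (\<lambda>x. \<bar>\<Sum>a\<in>A. c a * g (x a)\<bar> powr p) \<and>
       (\<integral>x. \<bar>\<Sum>a\<in>A. c a * g (x a)\<bar> powr p \<partial>PiM A (\<lambda>_. \<mu>))
         \<le> (K * sqrt (\<Sum>a\<in>A. (c a)\<^sup>2)) powr p * (\<integral>x. \<bar>g x\<bar> powr p \<partial>\<mu>)"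
    if "finite A" "A \<noteq> {}" "card A \<le> card L" for A :: "nat set" and c
    using Hg g that unfolding Hyp_def by blast
  have HH: "integrable (PiM A (\<lambda>_. \<nu>)) (\<lambda>x. \<bar>\<Sum>a\<in>A. c a * h (x a)\<bar> powr p) \<and>
       (\<integral>x. \<bar>\<Sum>a\<in>A. c a * h (x a)\<bar> powr p \<partial>PiM A (\<lambda>_. \<nu>))
         \<le> (K * sqrt (\<Sum>a\<in>A. (c a)\<^sup>2)) powr p * (\<integral>x. \<bar>h x\<bar> powr p \<partial>\<nu>)"
    if "finite A" "A \<noteq> {}" "card A \<le> card L" for A :: "nat set" and c
    using Hh h that unfolding Hyp_def by blast
  have cr: "integrable M (\<lambda>\<omega>. \<bar>\<Sum>(a,b)\<in>L. g (\<xi> a \<omega>) * h (\<eta> b \<omega>)\<bar> powr p) \<and>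
    (\<integral>\<omega>. \<bar>\<Sum>(a,b)\<in>L. g (\<xi> a \<omega>) * h (\<eta> b \<omega>)\<bar> powr p \<partial>M)
      \<le> K powr p * K powr p * real (card L) powr (p/2) * (\<integral>x. \<bar>g x\<bar> powr p \<partial>\<mu>) * (\<integral>x. \<bar>h x\<bar> powr p \<partial>\<nu>)"
    by (rule core[OF M mu nu ind L p K0 g(1) h(1) HG HH])
  show "integrable M (\<lambda>\<omega>. \<bar>1 / sqrt (real (card L)) * (\<Sum>(a,b)\<in>L. g (\<xi> a \<omega>) * h (\<eta> b \<omega>))\<bar> powr p)"
    using integrable_cmult_powr[of M "\<lambda>\<omega>. \<Sum>(a,b)\<in>L. g (\<xi> a \<omega>) * h (\<eta> b \<omega>)" p] cr by blast
  define s where "s = sqrt (real (card L))"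
  have s: "s > 0" using L by (simp add: s_def card_gt_0_iff)
  define G where "G = (\<integral>x. \<bar>g x\<bar> powr p \<partial>\<mu>)"
  define H where "H = (\<integral>x. \<bar>h x\<bar> powr p \<partial>\<nu>)"
  have GH: "G \<ge> 0" "H \<ge> 0" unfolding G_def H_def by (auto intro!: integral_nonneg_AE)
  have "Lpn M p (\<lambda>\<omega>. 1 / s * (\<Sum>(a,b)\<in>L. g (\<xi> a \<omega>) * h (\<eta> b \<omega>)))
      = 1 / s * Lpn M p (\<lambda>\<omega>. \<Sum>(a,b)\<in>L. g (\<xi> a \<omega>) * h (\<eta> b \<omega>))"
    using p s by (subst Lpn_cmult) auto
  also have "Lpn M p (\<lambda>\<omega>. \<Sum>(a,b)\<in>L. g (\<xi> a \<omega>) * h (\<eta> b \<omega>))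
      \<le> (K powr p * K powr p * real (card L) powr (p/2) * G * H) powr (1/p)"
    unfolding Lpn_def using cr p by (intro powr_mono2) (auto simp: G_def H_def intro!: integral_nonneg_AE)
  also have "(K powr p * K powr p * real (card L) powr (p/2) * G * H) powr (1/p)
      = K\<^sup>2 * s * (G powr (1/p) * H powr (1/p))"
  proof -
    have "(K powr p * K powr p * real (card L) powr (p/2) * G * H) powr (1/p)
        = (K powr p) powr (1/p) * (K powr p) powr (1/p) * (real (card L) powr (p/2)) powr (1/p) * G powr (1/p) * H powr (1/p)"
      using K0 GH by (simp add: powr_mult)
    also have "\<dots> = K * K * real (card L) powr (1/2) * G powr (1/p) * H powr (1/p)"
      using p K0 by (simp add: powr_powr)
    also have "\<dots> = K\<^sup>2 * s * (G powr (1/p) * H powr (1/p))"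
      by (simp add: s_def powr_half_sqrt power2_eq_square)
    finally show ?thesis .
  qed
  finally have "Lpn M p (\<lambda>\<omega>. 1 / s * (\<Sum>(a,b)\<in>L. g (\<xi> a \<omega>) * h (\<eta> b \<omega>)))
     \<le> 1 / s * (K\<^sup>2 * s * (G powr (1/p) * H powr (1/p)))"
    using s by (simp add: divide_right_mono)
  also have "\<dots> = K\<^sup>2 * Lpn \<mu> p g * Lpn \<nu> p h"
    using s by (simp add: Lpn_def G_def H_def)
  finally show "Lpn M p (\<lambda>\<omega>. 1 / sqrt (real (card L)) * (\<Sum>(a,b)\<in>L. g (\<xi> a \<omega>) * h (\<eta> b \<omega>)))
       \<le> K\<^sup>2 * Lpn \<mu> p g * Lpn \<nu> p h" unfolding s_def .
qed


lemma per_L: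
  fixes f :: "'x \<times> 'y \<Rightarrow> real" and lam :: "nat \<Rightarrow> nat \<Rightarrow> real"
    and g :: "nat \<Rightarrow> 'x \<Rightarrow> real" and h :: "nat \<Rightarrow> 'y \<Rightarrow> real"
  assumes M: "prob_space M" and mu: "prob_space \<mu>" and nu: "prob_space \<nu>"
    and ind: "indep_laws M \<mu> \<nu> \<xi> \<eta>"
    and L: "finite L" "L \<noteq> {}" "L \<subseteq> {1..} \<times> {1..}"
    and p: "p \<ge> 2" and K0: "K \<ge> 0"
    and Hg: "Hyp \<mu> p K (card L)" and Hh: "Hyp \<nu> p K (card L)"
    and fm: "f \<in> borel_measurable (\<mu> \<Otimes>\<^sub>M \<nu>)"
    and gi: "\<forall>i. g i \<in> borel_measurable \<mu> \<and> integrable \<mu> (\<lambda>x. \<bar>g i x\<bar> powr p) \<and>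
           integrable \<mu> (g i) \<and> (\<integral>x. g i x \<partial>\<mu>) = 0"
    and hj: "\<forall>j. h j \<in> borel_measurable \<nu> \<and> integrable \<nu> (\<lambda>y. \<bar>h j y\<bar> powr p) \<and>
           integrable \<nu> (h j) \<and> (\<integral>y. h j y \<partial>\<nu>) = 0"
    and conv: "(\<lambda>N. \<integral>\<^sup>+ z. ennreal (\<bar>(\<Sum>i<N. \<Sum>j<N. lam i j * g i (fst z) * h j (snd z)) - f z\<bar> powr p)
              \<partial>(\<mu> \<Otimes>\<^sub>M \<nu>)) \<longlonglongrightarrow> 0"
  shows "lpnorm M p (SL L f \<xi> \<eta>) \<le> ereal (K\<^sup>2) * (\<Sum>i. \<Sum>j. ereal (\<bar>lam i j\<bar> * Lpn \<mu> p (g i) * Lpn \<nu> p (h j)))"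
proof -
  interpret M: prob_space M by fact
  note fmm[measurable] = fm
  have p1: "p \<ge> 1" "p > 0" using p by auto
  have gm[measurable]: "g i \<in> borel_measurable \<mu>" for i using gi by blast
  have hm[measurable]: "h j \<in> borel_measurable \<nu>" for j using hj by blast
  have xim: "\<xi> a \<in> M \<rightarrow>\<^sub>M \<mu>" if "a \<ge> 1" for a using indep_laws_meas(1)[OF ind that] .
  have etam: "\<eta> b \<in> M \<rightarrow>\<^sub>M \<nu>" if "b \<ge> 1" for b using indep_laws_meas(2)[OF ind that] .
  have Lab: "a \<ge> 1" "b \<ge> 1" if "(a, b) \<in> L" for a b using L(3) that by auto
  define s where "s = sqrt (real (card L))"
  have s: "s > 0" using L by (simp add: s_def card_gt_0_iff)
  define FN where "FN = (\<lambda>N z. \<Sum>i<N. \<Sum>j<N. lam i j * g i (fst z) * h j (snd z))"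
  have FNm[measurable]: "FN N \<in> borel_measurable (\<mu> \<Otimes>\<^sub>M \<nu>)" for N unfolding FN_def by measurable
  define Y where "Y = (\<lambda>i j \<omega>. 1 / s * (\<Sum>(a,b)\<in>L. g i (\<xi> a \<omega>) * h j (\<eta> b \<omega>)))"
  define Q where "Q = (\<lambda>N::nat. {..<N} \<times> {..<N})"
  define T where "T = (\<lambda>N \<omega>. \<Sum>(i,j)\<in>Q N. lam i j * Y i j \<omega>)"
  define R where "R = (\<lambda>N \<omega>. 1 / s * (\<Sum>(a,b)\<in>L. f (\<xi> a \<omega>, \<eta> b \<omega>) - FN N (\<xi> a \<omega>, \<eta> b \<omega>)))"
  define c where "c = (\<Sum>i. \<Sum>j. ereal (\<bar>lam i j\<bar> * Lpn \<mu> p (g i) * Lpn \<nu> p (h j)))"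
  define \<pi> where "\<pi> = (\<lambda>N. \<Sum>(i,j)\<in>Q N. \<bar>lam i j\<bar> * Lpn \<mu> p (g i) * Lpn \<nu> p (h j))"
  have pairm: "(\<lambda>\<omega>. (\<xi> a \<omega>, \<eta> b \<omega>)) \<in> M \<rightarrow>\<^sub>M \<mu> \<Otimes>\<^sub>M \<nu>" if "(a, b) \<in> L" for a b
    using xim[OF Lab(1)[OF that]] etam[OF Lab(2)[OF that]] by measurable
  have compm: "(\<lambda>\<omega>. F (\<xi> a \<omega>, \<eta> b \<omega>)) \<in> borel_measurable M"
    if "(a, b) \<in> L" "F \<in> borel_measurable (\<mu> \<Otimes>\<^sub>M \<nu>)" for a b and F :: "'x \<times> 'y \<Rightarrow> real"
    using measurable_compose[OF pairm[OF that(1)] that(2)] .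
  have sumLm: "(\<lambda>\<omega>. \<Sum>(a,b)\<in>L. F a b (\<xi> a \<omega>, \<eta> b \<omega>)) \<in> borel_measurable M"
    if "\<And>a b. F a b \<in> borel_measurable (\<mu> \<Otimes>\<^sub>M \<nu>)" for F :: "nat \<Rightarrow> nat \<Rightarrow> 'x \<times> 'y \<Rightarrow> real"
  proof (rule borel_measurable_sum)
    fix ab assume "ab \<in> L"
    then show "(\<lambda>\<omega>. case ab of (a, b) \<Rightarrow> F a b (\<xi> a \<omega>, \<eta> b \<omega>)) \<in> borel_measurable M"
      using compm that by (cases ab) auto
  qed
  have Ym: "Y i j \<in> borel_measurable M" for i j
  proof -
    have "(\<lambda>\<omega>. \<Sum>(a,b)\<in>L. (\<lambda>z. g i (fst z) * h j (snd z)) (\<xi> a \<omega>, \<eta> b \<omega>)) \<in> borel_measurable M"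
      by (rule sumLm) measurable
    then show ?thesis unfolding Y_def by simp
  qed
  have Rm: "R N \<in> borel_measurable M" for N
  proof -
    have "(\<lambda>\<omega>. \<Sum>(a,b)\<in>L. (\<lambda>z. f z - FN N z) (\<xi> a \<omega>, \<eta> b \<omega>)) \<in> borel_measurable M"
      by (rule sumLm) (intro borel_measurable_diff fm FNm)
    then show ?thesis unfolding R_def by simp
  qed
  have Tm: "T N \<in> borel_measurable M" for N
    unfolding T_def using Ym by (intro borel_measurable_sum) (auto split: prod.split)
  have TFN: "T N \<omega> = 1 / s * (\<Sum>(a,b)\<in>L. FN N (\<xi> a \<omega>, \<eta> b \<omega>))" for N \<omega>
  proof -
    have FN_alt: "FN N z = (\<Sum>ij\<in>Q N. lam (fst ij) (snd ij) * g (fst ij) (fst z) * h (snd ij) (snd z))" for z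
      unfolding FN_def Q_def by (simp add: sum.cartesian_product case_prod_beta)
    have "(\<Sum>(a,b)\<in>L. FN N (\<xi> a \<omega>, \<eta> b \<omega>))
        = (\<Sum>ab\<in>L. \<Sum>ij\<in>Q N. lam (fst ij) (snd ij) * (g (fst ij) (\<xi> (fst ab) \<omega>) * h (snd ij) (\<eta> (snd ab) \<omega>)))"
      by (simp add: FN_alt case_prod_beta mult.assoc)
    also have "\<dots> = (\<Sum>ij\<in>Q N. \<Sum>ab\<in>L. lam (fst ij) (snd ij) * (g (fst ij) (\<xi> (fst ab) \<omega>) * h (snd ij) (\<eta> (snd ab) \<omega>)))"
      by (rule sum.swap)
    also have "\<dots> = (\<Sum>ij\<in>Q N. lam (fst ij) (snd ij) * (\<Sum>ab\<in>L. g (fst ij) (\<xi> (fst ab) \<omega>) * h (snd ij) (\<eta> (snd ab) \<omega>)))"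
      by (simp add: sum_distrib_left)
    finally have "1 / s * (\<Sum>(a,b)\<in>L. FN N (\<xi> a \<omega>, \<eta> b \<omega>))
       = (\<Sum>ij\<in>Q N. lam (fst ij) (snd ij) * (1 / s * (\<Sum>ab\<in>L. g (fst ij) (\<xi> (fst ab) \<omega>) * h (snd ij) (\<eta> (snd ab) \<omega>))))"
      by (simp add: sum_distrib_left mult_ac)
    then show ?thesis by (simp add: T_def Y_def case_prod_beta)
  qed
  have decomp: "SL L f \<xi> \<eta> \<omega> = T N \<omega> + R N \<omega>" for N \<omega>
  proof -
    have "T N \<omega> + R N \<omega> = 1 / s * ((\<Sum>(a,b)\<in>L. FN N (\<xi> a \<omega>, \<eta> b \<omega>)) + (\<Sum>(a,b)\<in>L. f (\<xi> a \<omega>, \<eta> b \<omega>) - FN N (\<xi> a \<omega>, \<eta> b \<omega>)))"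
      by (simp add: TFN R_def distrib_left)
    also have "(\<Sum>(a,b)\<in>L. FN N (\<xi> a \<omega>, \<eta> b \<omega>)) + (\<Sum>(a,b)\<in>L. f (\<xi> a \<omega>, \<eta> b \<omega>) - FN N (\<xi> a \<omega>, \<eta> b \<omega>))
        = (\<Sum>(a,b)\<in>L. f (\<xi> a \<omega>, \<eta> b \<omega>))"
      by (simp add: sum.distrib[symmetric] case_prod_beta)
    finally show ?thesis by (simp add: SL_def s_def)
  qed
  have Yb: "integrable M (\<lambda>\<omega>. \<bar>Y i j \<omega>\<bar> powr p)" "Lpn M p (Y i j) \<le> K\<^sup>2 * Lpn \<mu> p (g i) * Lpn \<nu> p (h j)" for i j
  proof -
    have gi': "g i \<in> borel_measurable \<mu>" "integrable \<mu> (\<lambda>x. \<bar>g i x\<bar> powr p)" "integrable \<mu> (g i)" "(\<integral>x. g i x \<partial>\<mu>) = 0"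
      using gi by auto
    have hj': "h j \<in> borel_measurable \<nu>" "integrable \<nu> (\<lambda>y. \<bar>h j y\<bar> powr p)" "integrable \<nu> (h j)" "(\<integral>y. h j y \<partial>\<nu>) = 0"
      using hj by auto
    note yb = Y_bound[OF M mu nu ind L p K0 Hg Hh gi' hj']
    show "integrable M (\<lambda>\<omega>. \<bar>Y i j \<omega>\<bar> powr p)" using yb(1) by (simp add: Y_def s_def)
    show "Lpn M p (Y i j) \<le> K\<^sup>2 * Lpn \<mu> p (g i) * Lpn \<nu> p (h j)"
      using yb(2) by (simp add: Y_def[abs_def] s_def)
  qed
  have Tb: "integrable M (\<lambda>\<omega>. \<bar>T N \<omega>\<bar> powr p) \<and> Lpn M p (T N) \<le> K\<^sup>2 * \<pi> N" for N
  proof -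
    have fin: "finite (Q N)" by (simp add: Q_def)
    have m: "(\<lambda>\<omega>. case ij of (i, j) \<Rightarrow> lam i j * Y i j \<omega>) \<in> borel_measurable M" for ij
      using Ym by (cases ij) auto
    have it: "integrable M (\<lambda>\<omega>. \<bar>case ij of (i, j) \<Rightarrow> lam i j * Y i j \<omega>\<bar> powr p)" for ij
      using integrable_cmult_powr[OF Yb(1)] by (cases ij) auto
    have mk: "integrable M (\<lambda>\<omega>. \<bar>\<Sum>ij\<in>Q N. case ij of (i, j) \<Rightarrow> lam i j * Y i j \<omega>\<bar> powr p) \<and>
        Lpn M p (\<lambda>\<omega>. \<Sum>ij\<in>Q N. case ij of (i, j) \<Rightarrow> lam i j * Y i j \<omega>)
          \<le> (\<Sum>ij\<in>Q N. Lpn M p (\<lambda>\<omega>. case ij of (i, j) \<Rightarrow> lam i j * Y i j \<omega>))"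
      by (rule minkowski_sum[OF p1(1) fin m it])
    have "(\<Sum>ij\<in>Q N. Lpn M p (\<lambda>\<omega>. case ij of (i, j) \<Rightarrow> lam i j * Y i j \<omega>))
        \<le> (\<Sum>ij\<in>Q N. case ij of (i, j) \<Rightarrow> K\<^sup>2 * (\<bar>lam i j\<bar> * Lpn \<mu> p (g i) * Lpn \<nu> p (h j)))"
    proof (intro sum_mono)
      fix ij assume "ij \<in> Q N"
      obtain i j where ij: "ij = (i, j)" by (cases ij)
      have "Lpn M p (\<lambda>\<omega>. lam i j * Y i j \<omega>) = \<bar>lam i j\<bar> * Lpn M p (Y i j)"
        using p1 by (subst Lpn_cmult) auto
      also have "\<dots> \<le> \<bar>lam i j\<bar> * (K\<^sup>2 * Lpn \<mu> p (g i) * Lpn \<nu> p (h j))"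
        using Yb(2)[of i j] by (intro mult_left_mono) auto
      finally show "Lpn M p (\<lambda>\<omega>. case ij of (i, j) \<Rightarrow> lam i j * Y i j \<omega>)
          \<le> (case ij of (i, j) \<Rightarrow> K\<^sup>2 * (\<bar>lam i j\<bar> * Lpn \<mu> p (g i) * Lpn \<nu> p (h j)))"
        by (simp add: ij mult_ac)
    qed
    also have "\<dots> = K\<^sup>2 * \<pi> N"
      unfolding \<pi>_def sum_distrib_left by (intro sum.cong refl) (auto split: prod.split)
    finally have le: "Lpn M p (\<lambda>\<omega>. \<Sum>ij\<in>Q N. case ij of (i, j) \<Rightarrow> lam i j * Y i j \<omega>) \<le> K\<^sup>2 * \<pi> N"
      using mk by linarith
    have Teq: "T N = (\<lambda>\<omega>. \<Sum>ij\<in>Q N. case ij of (i, j) \<Rightarrow> lam i j * Y i j \<omega>)"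
      unfolding T_def ..
    show ?thesis unfolding Teq using mk le by (intro conjI) auto
  qed
  have \<pi>c: "ereal (\<pi> N) \<le> c" for N
  proof -
    define a where "a = (\<lambda>i j. ereal (\<bar>lam i j\<bar> * Lpn \<mu> p (g i) * Lpn \<nu> p (h j)))"
    have a0: "a i j \<ge> 0" for i j by (simp add: a_def Lpn_nonneg)
    have "ereal (\<pi> N) = (\<Sum>i<N. \<Sum>j<N. a i j)"
      by (simp add: \<pi>_def Q_def a_def sum.cartesian_product[symmetric] sum_ereal)
    also have "\<dots> \<le> (\<Sum>i<N. \<Sum>j. a i j)"
      by (intro sum_mono sum_le_suminf summable_ereal_pos a0) auto
    also have "\<dots> \<le> (\<Sum>i. \<Sum>j. a i j)"
      by (intro sum_le_suminf summable_ereal_pos suminf_nonneg a0) auto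
    finally show ?thesis by (simp add: c_def a_def)
  qed
  define I where "I = (\<lambda>N. \<integral>\<^sup>+ z. ennreal (\<bar>FN N z - f z\<bar> powr p) \<partial>(\<mu> \<Otimes>\<^sub>M \<nu>))"
  have I0: "I \<longlonglongrightarrow> 0" using conv by (simp add: I_def FN_def)
  define r where "r = (\<lambda>N. enn2real (I N) powr (1/p))"
  have Dabs: "\<bar>f z - FN N z\<bar> = \<bar>FN N z - f z\<bar>" for N z by simp
  have Dm: "(\<lambda>z. f z - FN N z) \<in> borel_measurable (\<mu> \<Otimes>\<^sub>M \<nu>)" for N
    by (intro borel_measurable_diff fm FNm)
  have rLpn: "Lpn (\<mu> \<Otimes>\<^sub>M \<nu>) p (\<lambda>z. f z - FN N z) = r N" for N
  proof -
    have "(\<integral>z. \<bar>f z - FN N z\<bar> powr p \<partial>(\<mu> \<Otimes>\<^sub>M \<nu>)) = enn2real (I N)"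
      unfolding I_def Dabs by (intro integral_eq_nn_integral) auto
    then show ?thesis by (simp add: Lpn_def r_def)
  qed
  have Rb: "integrable M (\<lambda>\<omega>. \<bar>R N \<omega>\<bar> powr p) \<and> Lpn M p (R N) \<le> s * r N" if fin: "I N < \<infinity>" for N
  proof -
    have Di: "integrable (\<mu> \<Otimes>\<^sub>M \<nu>) (\<lambda>z. \<bar>f z - FN N z\<bar> powr p)"
      unfolding Dabs using fin by (intro integrableI_nonneg) (auto simp: I_def)
    note pl = pair_Lp[OF M mu nu ind _ _ Dm Di]
    have m: "(\<lambda>\<omega>. case ab of (a, b) \<Rightarrow> f (\<xi> a \<omega>, \<eta> b \<omega>) - FN N (\<xi> a \<omega>, \<eta> b \<omega>)) \<in> borel_measurable M"
      if "ab \<in> L" for ab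
      using that compm[OF _ Dm] by (cases ab) auto
    have it: "integrable M (\<lambda>\<omega>. \<bar>case ab of (a, b) \<Rightarrow> f (\<xi> a \<omega>, \<eta> b \<omega>) - FN N (\<xi> a \<omega>, \<eta> b \<omega>)\<bar> powr p)"
      if "ab \<in> L" for ab
      using that pl(1) Lab by (cases ab) auto
    have mk: "integrable M (\<lambda>\<omega>. \<bar>\<Sum>ab\<in>L. case ab of (a, b) \<Rightarrow> f (\<xi> a \<omega>, \<eta> b \<omega>) - FN N (\<xi> a \<omega>, \<eta> b \<omega>)\<bar> powr p) \<and>
       Lpn M p (\<lambda>\<omega>. \<Sum>ab\<in>L. case ab of (a, b) \<Rightarrow> f (\<xi> a \<omega>, \<eta> b \<omega>) - FN N (\<xi> a \<omega>, \<eta> b \<omega>))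
        \<le> (\<Sum>ab\<in>L. Lpn M p (\<lambda>\<omega>. case ab of (a, b) \<Rightarrow> f (\<xi> a \<omega>, \<eta> b \<omega>) - FN N (\<xi> a \<omega>, \<eta> b \<omega>)))"
      by (rule minkowski_sum[OF p1(1) L(1) m it])
    have "(\<Sum>ab\<in>L. Lpn M p (\<lambda>\<omega>. case ab of (a, b) \<Rightarrow> f (\<xi> a \<omega>, \<eta> b \<omega>) - FN N (\<xi> a \<omega>, \<eta> b \<omega>)))
        = (\<Sum>ab\<in>L. r N)"
    proof (intro sum.cong refl)
      fix ab assume ab: "ab \<in> L"
      obtain a b where e: "ab = (a, b)" by (cases ab)
      show "Lpn M p (\<lambda>\<omega>. case ab of (a, b) \<Rightarrow> f (\<xi> a \<omega>, \<eta> b \<omega>) - FN N (\<xi> a \<omega>, \<eta> b \<omega>)) = r N"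
        using pl(2)[of a b] Lab[of a b] ab rLpn[of N] by (simp add: e)
    qed
    also have "\<dots> = real (card L) * r N" by simp
    finally have sb: "Lpn M p (\<lambda>\<omega>. \<Sum>ab\<in>L. case ab of (a, b) \<Rightarrow> f (\<xi> a \<omega>, \<eta> b \<omega>) - FN N (\<xi> a \<omega>, \<eta> b \<omega>))
        \<le> real (card L) * r N" using mk by linarith
    have "Lpn M p (R N) = 1 / s * Lpn M p (\<lambda>\<omega>. \<Sum>ab\<in>L. case ab of (a, b) \<Rightarrow> f (\<xi> a \<omega>, \<eta> b \<omega>) - FN N (\<xi> a \<omega>, \<eta> b \<omega>))"
      unfolding R_def using p1 s by (subst Lpn_cmult) auto
    also have "\<dots> \<le> 1 / s * (real (card L) * r N)"
      using sb s by (intro mult_left_mono) auto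
    also have "\<dots> = s * r N"
      using s by (simp add: s_def field_simps)
    finally show ?thesis
      using integrable_cmult_powr[OF conjunct1[OF mk], of "1 / s"] by (simp add: R_def)
  qed
  have rt: "(\<lambda>N. s * r N) \<longlonglongrightarrow> 0"
  proof -
    have "(\<lambda>N. enn2real (I N)) \<longlonglongrightarrow> 0"
      using tendsto_enn2real[of I "0" sequentially] I0 by simp
    then have "(\<lambda>N. enn2real (I N) powr (1/p)) \<longlonglongrightarrow> 0"
      using p1 by (intro tendsto_zero_powrI) auto
    then show ?thesis using tendsto_mult_right_zero[of _ sequentially s] by (simp add: r_def)
  qed
  have evfin: "eventually (\<lambda>N. I N < \<infinity>) sequentially"
  proof -
    have ev1: "eventually (\<lambda>N. I N < 1) sequentially" using order_tendstoD(2)[OF I0, of 1] by simp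
    have one: "(1::ennreal) < \<infinity>" by simp
    show ?thesis using ev1
    proof (rule eventually_mono)
      fix N assume "I N < 1"
      then show "I N < \<infinity>" using one by (rule less_trans)
    qed
  qed
  have key: "integrable M (\<lambda>\<omega>. \<bar>SL L f \<xi> \<eta> \<omega>\<bar> powr p) \<and> Lpn M p (SL L f \<xi> \<eta>) \<le> K\<^sup>2 * \<pi> N + s * r N"
    if fin: "I N < \<infinity>" for N
  proof -
    have eq: "SL L f \<xi> \<eta> = (\<lambda>\<omega>. T N \<omega> + R N \<omega>)" by (rule ext) (rule decomp)
    have tb: "integrable M (\<lambda>\<omega>. \<bar>T N \<omega>\<bar> powr p)" "Lpn M p (T N) \<le> K\<^sup>2 * \<pi> N"
      using Tb[of N] by auto
    have rb: "integrable M (\<lambda>\<omega>. \<bar>R N \<omega>\<bar> powr p)" "Lpn M p (R N) \<le> s * r N"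
      using Rb[OF fin] by auto
    have i: "integrable M (\<lambda>\<omega>. \<bar>T N \<omega> + R N \<omega>\<bar> powr p)"
      by (rule minkowski_integrable[OF p1(1) Tm Rm tb(1) rb(1)])
    have l: "Lpn M p (\<lambda>\<omega>. T N \<omega> + R N \<omega>) \<le> Lpn M p (T N) + Lpn M p (R N)"
      by (rule minkowski[OF p1(1) Tm Rm tb(1) rb(1)])
    have "Lpn M p (\<lambda>\<omega>. T N \<omega> + R N \<omega>) \<le> K\<^sup>2 * \<pi> N + s * r N"
      using l tb(2) rb(2) by linarith
    with i show ?thesis unfolding eq by (intro conjI)
  qed
  obtain N0 where N0: "I N0 < \<infinity>" using evfin by (auto simp: eventually_sequentially)
  have intS: "integrable M (\<lambda>\<omega>. \<bar>SL L f \<xi> \<eta> \<omega>\<bar> powr p)" using key[OF N0] by blast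
  have lp: "lpnorm M p (SL L f \<xi> \<eta>) = ereal (Lpn M p (SL L f \<xi> \<eta>))"
    using intS by (simp add: lpnorm_def Lpn_def)
  show ?thesis
    unfolding lp c_def[symmetric]
  proof (rule ereal_le_epsilon2)
    fix e :: real assume e: "0 < e"
    have "eventually (\<lambda>N. s * r N < e) sequentially"
      using order_tendstoD(2)[OF rt e] .
    with evfin have "eventually (\<lambda>N. I N < \<infinity> \<and> s * r N < e) sequentially"
      by (rule eventually_conj)
    then obtain N where N: "I N < \<infinity>" "s * r N < e" by (auto simp: eventually_sequentially)
    have "ereal (Lpn M p (SL L f \<xi> \<eta>)) \<le> ereal (K\<^sup>2 * \<pi> N) + ereal e"
      using key[OF N(1)] N(2) by simp
    also have "ereal (K\<^sup>2 * \<pi> N) \<le> ereal (K\<^sup>2) * c"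
    proof -
      have "ereal (K\<^sup>2 * \<pi> N) = ereal (K\<^sup>2) * ereal (\<pi> N)" by simp
      also have "\<dots> \<le> ereal (K\<^sup>2) * c" by (rule ereal_mult_left_mono[OF \<pi>c]) simp
      finally show ?thesis .
    qed
    finally show "ereal (Lpn M p (SL L f \<xi> \<eta>)) \<le> ereal (K\<^sup>2) * c + ereal e"
      by (simp add: add_right_mono)
  qed
qed


definition DSet :: "'x measure \<Rightarrow> 'y measure \<Rightarrow> real \<Rightarrow> ('x \<times> 'y \<Rightarrow> real) \<Rightarrow> ereal set" where
  "DSet \<mu> \<nu> p f = {c. \<exists>(lam :: nat \<Rightarrow> nat \<Rightarrow> real) (g :: nat \<Rightarrow> 'x \<Rightarrow> real) (h :: nat \<Rightarrow> 'y \<Rightarrow> real).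
      (\<forall>i. g i \<in> borel_measurable \<mu> \<and> integrable \<mu> (\<lambda>x. \<bar>g i x\<bar> powr p) \<and>
           integrable \<mu> (g i) \<and> (\<integral>x. g i x \<partial>\<mu>) = 0) \<and>
      (\<forall>j. h j \<in> borel_measurable \<nu> \<and> integrable \<nu> (\<lambda>y. \<bar>h j y\<bar> powr p) \<and>
           integrable \<nu> (h j) \<and> (\<integral>y. h j y \<partial>\<nu>) = 0) \<and>
      ((\<lambda>N. \<integral>\<^sup>+ z. ennreal (\<bar>(\<Sum>i<N. \<Sum>j<N. lam i j * g i (fst z) * h j (snd z)) - f z\<bar> powr p)
              \<partial>(\<mu> \<Otimes>\<^sub>M \<nu>)) \<longlonglongrightarrow> 0) \<and>
      c = (\<Sum>i. \<Sum>j. ereal (\<bar>lam i j\<bar> * Lpn \<mu> p (g i) * Lpn \<nu> p (h j)))}"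

lemma Dnorm_DSet: "Dnorm \<mu> \<nu> p f = Inf (DSet \<mu> \<nu> p f)"
  unfolding Dnorm_def DSet_def ..

lemma DSet_nonneg: "c \<in> DSet \<mu> \<nu> p f \<Longrightarrow> c \<ge> 0"
  unfolding DSet_def
  by (auto intro!: suminf_nonneg summable_ereal_pos simp: Lpn_nonneg)

lemma Dnorm_nonneg: "Dnorm \<mu> \<nu> p f \<ge> 0"
  unfolding Dnorm_DSet by (rule Inf_greatest) (rule DSet_nonneg)

lemma claim1:
  fixes f :: "'x \<times> 'y \<Rightarrow> real"
  assumes M: "prob_space M" and mu: "prob_space \<mu>" and nu: "prob_space \<nu>"
    and ind: "indep_laws M \<mu> \<nu> \<xi> \<eta>"
    and L: "finite L" "L \<noteq> {}" "L \<subseteq> {1..} \<times> {1..}"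
    and p: "p \<ge> 2" and K0: "K \<ge> 0"
    and Hg: "Hyp \<mu> p K (card L)" and Hh: "Hyp \<nu> p K (card L)"
    and fm: "f \<in> borel_measurable (\<mu> \<Otimes>\<^sub>M \<nu>)"
    and Dfin: "Dnorm \<mu> \<nu> p f < \<infinity>"
  shows "lpnorm M p (SL L f \<xi> \<eta>) \<le> ereal (K\<^sup>2) * Dnorm \<mu> \<nu> p f"
proof -
  have each: "lpnorm M p (SL L f \<xi> \<eta>) \<le> ereal (K\<^sup>2) * c" if "c \<in> DSet \<mu> \<nu> p f" for c
  proof -
    from that obtain lam g h where
      gi: "\<forall>i. g i \<in> borel_measurable \<mu> \<and> integrable \<mu> (\<lambda>x. \<bar>g i x\<bar> powr p) \<and>
           integrable \<mu> (g i) \<and> (\<integral>x. g i x \<partial>\<mu>) = 0"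
      and hj: "\<forall>j. h j \<in> borel_measurable \<nu> \<and> integrable \<nu> (\<lambda>y. \<bar>h j y\<bar> powr p) \<and>
           integrable \<nu> (h j) \<and> (\<integral>y. h j y \<partial>\<nu>) = 0"
      and conv: "(\<lambda>N. \<integral>\<^sup>+ z. ennreal (\<bar>(\<Sum>i<N. \<Sum>j<N. lam i j * g i (fst z) * h j (snd z)) - f z\<bar> powr p)
              \<partial>(\<mu> \<Otimes>\<^sub>M \<nu>)) \<longlonglongrightarrow> 0"
      and c: "c = (\<Sum>i. \<Sum>j. ereal (\<bar>lam i j\<bar> * Lpn \<mu> p (g i) * Lpn \<nu> p (h j)))"
      unfolding DSet_def by blast
    show ?thesis unfolding c by (rule per_L[OF M mu nu ind L p K0 Hg Hh fm gi hj conv])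
  qed
  have ne: "DSet \<mu> \<nu> p f \<noteq> {}"
    using Dfin unfolding Dnorm_DSet by (auto simp: top_ereal_def)
  then obtain c0 where c0: "c0 \<in> DSet \<mu> \<nu> p f" by blast
  show ?thesis
  proof (cases "K = 0")
    case True
    have "lpnorm M p (SL L f \<xi> \<eta>) \<le> ereal (K\<^sup>2) * c0" by (rule each[OF c0])
    then show ?thesis using True by (simp add: zero_ereal_def[symmetric])
  next
    case False
    then have Kp: "K\<^sup>2 > 0" using K0 by simp
    have "lpnorm M p (SL L f \<xi> \<eta>) \<le> Inf {ereal (K\<^sup>2) * c | c. c \<in> DSet \<mu> \<nu> p f}"
      using each by (auto intro!: Inf_greatest)
    also have "\<dots> = ereal (K\<^sup>2) * Inf {c. c \<in> DSet \<mu> \<nu> p f}"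
      by (rule ereal_Inf_cmult[OF Kp])
    finally show ?thesis by (simp add: Dnorm_DSet)
  qed
qed

lemma ereal_sq_nonneg: "(x::ereal)\<^sup>2 \<ge> 0"
  by (cases x) (auto simp: power2_eq_square)

theorem mainTheorem2:
  fixes M :: "'m measure" and \<mu> :: "'x measure" and \<nu> :: "'y measure"
    and \<xi> :: "nat \<Rightarrow> 'm \<Rightarrow> 'x" and \<eta> :: "nat \<Rightarrow> 'm \<Rightarrow> 'y"
    and f :: "'x \<times> 'y \<Rightarrow> real" and p :: real
  assumes "prob_space M" "prob_space \<mu>" "prob_space \<nu>"
    and "indep_laws M \<mu> \<nu> \<xi> \<eta>"
    and "p \<ge> 2"
    and "f \<in> borel_measurable (\<mu> \<Otimes>\<^sub>M \<nu>)"
    and "integrable M (\<lambda>\<omega>. f (\<xi> 1 \<omega>, \<eta> 1 \<omega>))"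
    and "(\<integral>\<omega>. f (\<xi> 1 \<omega>, \<eta> 1 \<omega>) \<partial>M) = 0"
    and "Dnorm \<mu> \<nu> p f < \<infinity>"
  shows "(SUP L \<in> {L. L \<subseteq> {1..} \<times> {1..} \<and> finite L \<and> L \<noteq> {}}. lpnorm M p (SL L f \<xi> \<eta>))
           \<le> (KR p)\<^sup>2 * Dnorm \<mu> \<nu> p f"
proof (rule SUP_least)
  note M = assms(1) and mu = assms(2) and nu = assms(3) and ind = assms(4) and p = assms(5)
    and fm = assms(6) and Dfin = assms(9)
  have p1: "p \<ge> 1" using p by simp
  fix L :: "(nat \<times> nat) set" assume "L \<in> {L. L \<subseteq> {1..} \<times> {1..} \<and> finite L \<and> L \<noteq> {}}"
  then have L: "finite L" "L \<noteq> {}" "L \<subseteq> {1..} \<times> {1..}" by auto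
  define x where "x = lpnorm M p (SL L f \<xi> \<eta>)"
  define D where "D = Dnorm \<mu> \<nu> p f"
  have D0: "D \<ge> 0" unfolding D_def by (rule Dnorm_nonneg)
  have x0: "x \<ge> 0" unfolding x_def by (rule lpnorm_nonneg)
  have RHS0: "(KR p)\<^sup>2 * D \<ge> 0" using D0 ereal_sq_nonneg by (simp add: ereal_zero_le_0_iff)
  have bound: "x \<le> ereal (K\<^sup>2) * D" if "KRP K p" for K
  proof -
    have "x \<le> ereal (\<bar>K\<bar>\<^sup>2) * D"
      unfolding x_def D_def
      by (rule claim1[OF M mu nu ind L p _ Hyp_KR[OF that p1 mu] Hyp_KR[OF that p1 nu] fm Dfin]) simp
    then show ?thesis by simp
  qed
  show "x \<le> (KR p)\<^sup>2 * D"
  proof (cases "\<exists>K. KRP K p \<and> K \<le> 0")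
    case True
    then obtain K where K: "KRP K p" "K \<le> 0" by blast
    have "KRP 0 p" by (rule KRP_mono[OF K(1) K(2)])
    from bound[OF this] have "x \<le> 0" by (simp add: zero_ereal_def[symmetric])
    then show ?thesis using RHS0 by simp
  next
    case False
    note noneg = False
    show ?thesis
    proof (cases "\<exists>K. KRP K p")
      case False
      then have KRinf: "KR p = \<infinity>" by (simp add: KR_eq top_ereal_def)
      show ?thesis
      proof (cases "D = 0")
        case True
        have "x \<le> ereal ((sqrt (real (card L)))\<^sup>2) * D"
          unfolding x_def D_def
          by (rule claim1[OF M mu nu ind L p _ Hyp_crude[OF p1 mu] Hyp_crude[OF p1 nu] fm Dfin]) simp
        then have "x \<le> 0" using True by simp
        then show ?thesis using RHS0 by simp
      next
        case False
        then have "D > 0" using D0 by simp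
        then have e: "(KR p)\<^sup>2 * D = \<infinity>" using KRinf by (simp add: power2_eq_square)
        show ?thesis unfolding e by simp
      qed
    next
      case True
      then obtain K1 where K1: "KRP K1 p" by blast
      have Kpos: "K > 0" if "KRP K p" for K using noneg that by force
      have Dfin': "D \<noteq> \<infinity>" using Dfin by (simp add: D_def)
      show ?thesis
      proof (cases "D = 0")
        case True
        from bound[OF K1] True have "x \<le> 0" by simp
        then show ?thesis using RHS0 by simp
      next
        case False
        then obtain d where d: "D = ereal d" "d > 0" using D0 Dfin' by (cases D) auto
        have xb: "x \<le> ereal (K\<^sup>2 * d)" if "KRP K p" for K using bound[OF that] d by simp
        then have "x \<noteq> \<infinity>" using K1 by force
        then obtain x' where x': "x = ereal x'" "x' \<ge> 0" using x0 by (cases x) auto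
        define t where "t = sqrt (x' / d)"
        have t0: "t \<ge> 0" using x' d by (simp add: t_def)
        have tK: "t \<le> K" if "KRP K p" for K
        proof -
          have "x' \<le> K\<^sup>2 * d" using xb[OF that] x' by simp
          then have "x' / d \<le> K\<^sup>2" using d by (simp add: divide_le_eq)
          then have "sqrt (x' / d) \<le> sqrt (K\<^sup>2)" by (rule real_sqrt_le_mono)
          then show ?thesis using Kpos[OF that] by (simp add: t_def)
        qed
        have "ereal t \<le> KR p"
          unfolding KR_eq by (rule Inf_greatest) (auto intro: tK)
        moreover have "KR p \<le> ereal K1"
          unfolding KR_eq by (rule Inf_lower) (use K1 in blast)
        ultimately obtain k where k: "KR p = ereal k" "t \<le> k" by (cases "KR p") auto
        have "x' = t\<^sup>2 * d" using x' d by (simp add: t_def)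
        also have "\<dots> \<le> k\<^sup>2 * d" using t0 k d by (intro mult_right_mono power_mono) auto
        finally show ?thesis using x' k d by (simp add: power2_eq_square)
      qed
    qed
  qed
qed


end
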